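(* Let $r:\mathbb Z\to\mathbb C$ be any function and $p\ge1$ an integer. Define $R(k)=r(k)r(k-1)\cdots r(k-p+1)$ and, for $m=1,\dots,p$, $r^{(m)}(k)=R(kp+m-1)$ for $k\in\mathbb Z$. Then for every $n\in\mathbb Z$ and every $i\in\{1,\dots,p\}$ one has, as an identity of formal power series in $\mathbf t=(t_1,t_2,\dots)$ and $\mathbf t^*=(t^*_1,t^*_2,\dots)$, $$\tau_r\big(np+i,\mathbf t^{[p]},\mathbf t^{*[p]}\big)=\prod_{m=1}^{i}\tau_{r^{(m)}}(n+1,\mathbf t,\mathbf t^* )\prod_{m=i+1}^{p}\tau_{r^{(m)}}(n,\mathbf t,\mathbf t^* ).$$
   Context: For a function $\rho:\mathbb Z\to\mathbb C$, a partition $\lambda$ and $x\in\mathbb Z$, set $\rho_\lambda(x)=\prod_{(i,j)\in\lambda}\rho(x+j-i)$, the product over the boxes $(i,j)$ ($1\le j\le\lambda_i$) of the Young diagram, with $\rho_0=1$. Schur functions: $\exp(\sum_{m\ge1}t_mz^m)=\sum_{k\ge0}h_k(\mathbf t)z^k$, $h_k=0$ for $k<0$, $s_\lambda(\mathbf t)=\det(h_{\lambda_i-i+j}(\mathbf t))_{1\le i,j\le\ell(\lambda)}$. The hypergeometric tau function is $\tau_\rho(N,\mathbf t,\mathbf t^* )=\sum_\lambda \rho_\lambda(N)s_\lambda(\mathbf t)s_\lambda(\mathbf t^* )$, summed over all partitions (a formal power series in $\mathbf t,\mathbf t^*$). For $\mathbf t=(t_1,t_2,\dots)$, $\mathbf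 t^{[p]}$ denotes the sequence whose $(kp)$-th entry is $t_k$ for $k\ge1$ and whose other entries are $0$, i.e. $\mathbf t^{[p]}=(0,\dots,0,t_1,0,\dots,0,t_2,0,\dots)$ with blocks of length $p$; similarly for $\mathbf t^{*[p]}$. *)

theory Defs
  imports
    "HOL-Library.Poly_Mapping"
    "HOL-Analysis.Infinite_Sum"
    "HOL-Computational_Algebra.Formal_Power_Series"
    "Jordan_Normal_Form.Determinant"
begin

text \<open>Variables: Inl k stands for t_k, Inr k for t*_k (k >= 1).\<close>

type_synonym var = "nat + nat"
type_synonym monom = "var \<Rightarrow>\<^sub>0 nat"
type_synonym mpoly = "monom \<Rightarrow>\<^sub>0 complex"
type_synonym mser = "monom \<Rightarrow> complex"

definition pvar :: "var \<Rightarrow> mpoly" where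
  "pvar v = Poly_Mapping.single (Poly_Mapping.single v 1) 1"

definition pconst :: "complex \<Rightarrow> mpoly" where
  "pconst c = Poly_Mapping.single 0 c"

text \<open>The sequences t = (t_1,t_2,...) and t* (index 0 unused).\<close>
definition tseq :: "nat \<Rightarrow> mpoly" where "tseq k = pvar (Inl k)"
definition tsseq :: "nat \<Rightarrow> mpoly" where "tsseq k = pvar (Inr k)"

text \<open>t^[p]: the (kp)-th entry is t_k, all other entries are 0.\<close>
definition dilate :: "nat \<Rightarrow> (nat \<Rightarrow> mpoly) \<Rightarrow> nat \<Rightarrow> mpoly" where
  "dilate p a n = (if 0 < n \<and> p dvd n then a (n div p) else 0)"

definition gen_series :: "(nat \<Rightarrow> mpoly) \<Rightarrow> mpoly fps" where
  "gen_series a = Abs_fps (\<lambda>m. if m = 0 then 0 else a m)"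

text \<open>h_k(a) = [z^k] exp(sum_{m>=1} a_m z^m) = [z^k] sum_{n>=0} S^n/n!;
  since S has zero constant term, only n <= k contribute.\<close>
definition hcomp :: "(nat \<Rightarrow> mpoly) \<Rightarrow> nat \<Rightarrow> mpoly" where
  "hcomp a k = (\<Sum>n\<le>k. pconst (inverse (fact n)) * fps_nth (gen_series a ^ n) k)"

definition hZ :: "(nat \<Rightarrow> mpoly) \<Rightarrow> int \<Rightarrow> mpoly" where
  "hZ a k = (if k < 0 then 0 else hcomp a (nat k))"

text \<open>A partition is a weakly decreasing list of positive integers; lambda_i = l ! (i-1).\<close>
definition is_partition :: "nat list \<Rightarrow> bool" where
  "is_partition l \<longleftrightarrow> sorted_wrt (\<ge>) l \<and> 0 \<notin> set l"

text \<open>s_lambda(a) = det (h_{lambda_i - i + j}(a))_{1<=i,j<=ell(lambda)} (0-based indices here).\<close>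
definition schur :: "nat list \<Rightarrow> (nat \<Rightarrow> mpoly) \<Rightarrow> mpoly" where
  "schur l a = det (mat (length l) (length l)
      (\<lambda>(i, j). hZ a (int (l ! i) - int i + int j)))"

definition rho_part :: "(int \<Rightarrow> complex) \<Rightarrow> nat list \<Rightarrow> int \<Rightarrow> complex" where
  "rho_part \<rho> l x = (\<Prod>i<length l. \<Prod>j<l ! i. \<rho> (x + int j - int i))"

definition tau :: "(int \<Rightarrow> complex) \<Rightarrow> int \<Rightarrow> (nat \<Rightarrow> mpoly) \<Rightarrow> (nat \<Rightarrow> mpoly) \<Rightarrow> mser" where
  "tau \<rho> N a b = (\<lambda>m. infsum (\<lambda>l. rho_part \<rho> l N * Poly_Mapping.lookup (schur l a * schur l b) m)
                               {l. is_partition l})"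

definition ser_mult :: "mser \<Rightarrow> mser \<Rightarrow> mser" where
  "ser_mult f g = (\<lambda>m. \<Sum>(x, y) \<in> {(x, y). x + y = m}. f x * g y)"

definition ser_one :: mser where
  "ser_one = (\<lambda>m. if m = 0 then 1 else 0)"

definition ser_prod :: "(nat \<Rightarrow> mser) \<Rightarrow> nat list \<Rightarrow> mser" where
  "ser_prod F ms = foldr (\<lambda>m acc. ser_mult (F m) acc) ms ser_one"

definition Rfun :: "(int \<Rightarrow> complex) \<Rightarrow> nat \<Rightarrow> int \<Rightarrow> complex" where
  "Rfun r p k = (\<Prod>j<p. r (k - int j))"

definition rsup :: "(int \<Rightarrow> complex) \<Rightarrow> nat \<Rightarrow> nat \<Rightarrow> int \<Rightarrow> complex" where
  "rsup r p m k = Rfun r p (k * int p + int m - 1)"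

end

theory Submission
  imports Defs
begin


lemma finite_le_monom: fixes m :: monom shows "finite {x::monom. \<exists>y. x + y = m}"
proof -
  let ?A = "{x::monom. \<exists>y. x + y = m}"
  let ?f = "\<lambda>x::monom. restrict (Poly_Mapping.lookup x) (Poly_Mapping.keys m)"
  have sub: "?f ` ?A \<subseteq> PiE (Poly_Mapping.keys m) (\<lambda>v. {0..Poly_Mapping.lookup m v})"
  proof
    fix z assume "z \<in> ?f ` ?A"
    then obtain x y where z: "z = ?f x" and xy: "x + y = m" by blast
    have "Poly_Mapping.lookup x v \<le> Poly_Mapping.lookup m v" for v using xy by (auto simp: Poly_Mapping.lookup_add)
    then show "z \<in> PiE (Poly_Mapping.keys m) (\<lambda>v. {0..Poly_Mapping.lookup m v})" using z by auto
  qed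
  have inj: "inj_on ?f ?A"
  proof (rule inj_onI)
    fix x1 x2 assume x1: "x1 \<in> ?A" and x2: "x2 \<in> ?A" and eq: "?f x1 = ?f x2"
    show "x1 = x2"
    proof (rule poly_mapping_eqI)
      fix v
      show "Poly_Mapping.lookup x1 v = Poly_Mapping.lookup x2 v"
      proof (cases "v \<in> Poly_Mapping.keys m")
        case True then show ?thesis using eq by (metis restrict_apply')
      next
        case False
        then have "Poly_Mapping.lookup m v = 0" by (simp add: in_keys_iff)
        moreover obtain y1 y2 where "x1 + y1 = m" "x2 + y2 = m" using x1 x2 by auto
        ultimately show ?thesis
          by (metis add_is_0 Poly_Mapping.lookup_add)
      qed
    qed
  qed
  show ?thesis
    by (rule finite_imageD[OF finite_subset[OF sub] inj]) (auto intro!: finite_PiE)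
qed

lemma finite_dec: fixes m :: monom shows "finite {(x::monom, y). x + y = m}"
proof -
  have "{(x::monom, y). x + y = m} \<subseteq> (\<lambda>x. (x, m - x)) ` {x::monom. \<exists>y. x + y = m}"
    by (auto simp: image_def)
  then show ?thesis using finite_le_monom[of m] by (meson finite_imageI finite_subset)
qed

lemma lookup_mult_dec:
  "Poly_Mapping.lookup (P * Q) (m::monom) = (\<Sum>(x, y) \<in> {(x, y). x + y = m}. Poly_Mapping.lookup P x * Poly_Mapping.lookup (Q::mpoly) y)"
proof -
  let ?D = "{(x::monom, y). x + y = m}"
  let ?g = "\<lambda>l q. (Poly_Mapping.lookup P l * Poly_Mapping.lookup Q q when m = l + q)"
  have "Poly_Mapping.lookup (P * Q) m = (\<Sum>l. \<Sum>q. ?g l q)"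
    by (simp add: Poly_Mapping.lookup_mult Sum_any_right_distrib mult_when)
  also have "\<dots> = (\<Sum>(l, q). ?g l q)"
  proof (rule Sum_any.cartesian_product[of "fst ` ?D \<times> snd ` ?D"])
    show "finite (fst ` ?D \<times> snd ` ?D)" using finite_dec by auto
    show "{a. \<exists>b. ?g a b \<noteq> 0} \<times> {b. \<exists>a. ?g a b \<noteq> 0} \<subseteq> fst ` ?D \<times> snd ` ?D"
      by (auto simp: image_def when_def)
  qed
  also have "\<dots> = (\<Sum>(l, q) \<in> ?D. ?g l q)"
    by (rule Sum_any.expand_superset) (use finite_dec in \<open>auto simp: when_def split: if_splits\<close>)
  also have "\<dots> = (\<Sum>(x, y) \<in> ?D. Poly_Mapping.lookup P x * Poly_Mapping.lookup Q y)"
    by (rule sum.cong) (auto simp: when_def)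
  finally show ?thesis .
qed

lemma ser_mult_lookup:
  assumes "\<And>x y. x + y = m \<Longrightarrow> F x = Poly_Mapping.lookup P x"
      and "\<And>x y. x + y = m \<Longrightarrow> G y = Poly_Mapping.lookup Q y"
  shows "ser_mult F G m = Poly_Mapping.lookup (P * Q) m"
  unfolding ser_mult_def lookup_mult_dec
  by (rule sum.cong) (auto simp: assms(1)[symmetric] assms(2)[symmetric])

lemma lookup_pconst_mult: "Poly_Mapping.lookup (pconst c * P) x = c * Poly_Mapping.lookup P x"
proof -
  have "pconst c * P = Poly_Mapping.map ((*) c) P"
    unfolding pconst_def by (simp add: mult_map_scale_conv_mult)
  then show ?thesis by (simp add: Poly_Mapping.map.rep_eq when_def)
qed

definition subm :: "monom \<Rightarrow> monom \<Rightarrow> bool" where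
  "subm x m \<longleftrightarrow> (\<exists>y. x + y = m)"

lemma ser_prod_lookup:
  assumes "\<And>j x. j \<in> set ms \<Longrightarrow> subm x m \<Longrightarrow> F j x = Poly_Mapping.lookup (P j) x"
  shows "subm x m \<Longrightarrow> ser_prod F ms x = Poly_Mapping.lookup (prod_list (map P ms)) x"
  using assms
proof (induction ms arbitrary: x)
  case Nil
  then show ?case by (simp add: ser_prod_def ser_one_def lookup_one when_def)
next
  case (Cons j ms)
  have "ser_prod F (j # ms) x = ser_mult (F j) (ser_prod F ms) x"
    by (simp add: ser_prod_def)
  also have "\<dots> = Poly_Mapping.lookup (P j * prod_list (map P ms)) x"
  proof (rule ser_mult_lookup)
    fix u v assume uv: "u + v = x"
    obtain y where y: "x + y = m" using Cons.prems(1) unfolding subm_def by blast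
    have su: "subm u m" unfolding subm_def using y uv by (intro exI[of _ "v + y"]) (metis add.assoc)
    have sv: "subm v m" unfolding subm_def using y uv by (intro exI[of _ "u + y"]) (metis add.assoc add.commute)
    show "F j u = Poly_Mapping.lookup (P j) u" using Cons.prems(2)[OF _ su] by simp
    show "ser_prod F ms v = Poly_Mapping.lookup (prod_list (map P ms)) v"
      using Cons.IH[OF sv] Cons.prems(2) by simp
  qed
  finally show ?case by simp
qed

lemma subm_refl: "subm m m" unfolding subm_def by (rule exI[of _ 0]) simp

section \<open>Weighted homogeneity\<close>

definition wdeg :: "(var \<Rightarrow> nat) \<Rightarrow> monom \<Rightarrow> nat" where
  "wdeg w x = (\<Sum>v\<in>Poly_Mapping.keys x. w v * Poly_Mapping.lookup x v)"

lemma wdeg_add: "wdeg w (x + y) = wdeg w x + wdeg w y"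
  unfolding wdeg_def by (rule setsum_keys_plus_distrib) (auto simp: algebra_simps)

lemma wdeg_0[simp]: "wdeg w 0 = 0" unfolding wdeg_def by simp

definition homog :: "(var \<Rightarrow> nat) \<Rightarrow> mpoly \<Rightarrow> int \<Rightarrow> bool" where
  "homog w P d \<longleftrightarrow> (\<forall>x\<in>Poly_Mapping.keys P. int (wdeg w x) = d)"

lemma homog_0[simp]: "homog w 0 d" unfolding homog_def by simp

lemma homog_1[simp]: "homog w 1 0" unfolding homog_def by simp

lemma homog_add: "homog w P d \<Longrightarrow> homog w Q d \<Longrightarrow> homog w (P + Q) d"
  unfolding homog_def using Poly_Mapping.keys_add[of P Q] by auto

lemma homog_uminus: "homog w P d \<Longrightarrow> homog w (- P) d"
proof -
  have "Poly_Mapping.keys (- P) = Poly_Mapping.keys P" by (auto simp: in_keys_iff)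
  then show "homog w P d \<Longrightarrow> homog w (- P) d" unfolding homog_def by simp
qed

lemma homog_sum: "(\<And>i. i \<in> I \<Longrightarrow> homog w (f i) d) \<Longrightarrow> homog w (sum f I) d"
  by (induction I rule: infinite_finite_induct) (simp_all add: homog_add)

lemma homog_mult: "homog w P d \<Longrightarrow> homog w Q e \<Longrightarrow> homog w (P * Q) (d + e)"
proof -
  assume hP: "homog w P d" and hQ: "homog w Q e"
  show ?thesis unfolding homog_def
  proof
    fix x assume "x \<in> Poly_Mapping.keys (P * Q)"
    then obtain a b where "x = a + b" "a \<in> Poly_Mapping.keys P" "b \<in> Poly_Mapping.keys Q"
      using keys_mult[of P Q] by blast
    then show "int (wdeg w x) = d + e" using hP hQ unfolding homog_def by (simp add: wdeg_add)
  qed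
qed

lemma homog_prod: "finite I \<Longrightarrow> (\<And>i. i \<in> I \<Longrightarrow> homog w (f i) (d i)) \<Longrightarrow> homog w (prod f I) (sum d I)"
  by (induction I rule: finite_induct) (simp_all add: homog_mult)

lemma homog_pconst_mult: "homog w P d \<Longrightarrow> homog w (pconst c * P) d"
  unfolding homog_def by (metis in_keys_iff lookup_pconst_mult mult_zero_right)

lemma homog_cong: "homog w P d \<Longrightarrow> d = e \<Longrightarrow> homog w P e" by simp

lemma homog_lookup: "homog w P d \<Longrightarrow> Poly_Mapping.lookup P x \<noteq> 0 \<Longrightarrow> int (wdeg w x) = d"
  unfolding homog_def by (auto simp: in_keys_iff)

lemma pconst_1[simp]: "pconst 1 = 1"
  unfolding pconst_def by (simp add: one_poly_mapping.abs_eq single.abs_eq when_def)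

lemma hcomp_0: "hcomp a 0 = 1"
  unfolding hcomp_def by simp

lemma hZ_0[simp]: "hZ a 0 = 1" unfolding hZ_def by (simp add: hcomp_0)

lemma hZ_neg: "k < 0 \<Longrightarrow> hZ a k = 0" unfolding hZ_def by simp

definition graded :: "(var \<Rightarrow> nat) \<Rightarrow> (nat \<Rightarrow> mpoly) \<Rightarrow> bool" where
  "graded w a \<longleftrightarrow> (\<forall>j. homog w (a j) (int j))"

lemma homog_gen_series_power:
  assumes "graded w a"
  shows "homog w (fps_nth (gen_series a ^ n) k) (int k)"
proof (induction n arbitrary: k)
  case 0
  then show ?case by (cases k) simp_all
next
  case (Suc n)
  have "fps_nth (gen_series a ^ Suc n) k = (\<Sum>i=0..k. fps_nth (gen_series a) i * fps_nth (gen_series a ^ n) (k - i))"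
    by (simp add: fps_mult_nth)
  also have "homog w \<dots> (int k)"
  proof (rule homog_sum)
    fix i assume i: "i \<in> {0..k}"
    have "homog w (fps_nth (gen_series a) i) (int i)"
      using assms unfolding graded_def gen_series_def by simp
    then have "homog w (fps_nth (gen_series a) i * fps_nth (gen_series a ^ n) (k - i)) (int i + int (k - i))"
      using Suc.IH by (rule homog_mult)
    then show "homog w (fps_nth (gen_series a) i * fps_nth (gen_series a ^ n) (k - i)) (int k)"
      using i by simp
  qed
  finally show ?case .
qed

lemma homog_hcomp: "graded w a \<Longrightarrow> homog w (hcomp a k) (int k)"
  unfolding hcomp_def
  by (intro homog_sum homog_pconst_mult homog_gen_series_power)

lemma homog_hZ: "graded w a \<Longrightarrow> homog w (hZ a k) k"
  unfolding hZ_def using homog_hcomp[of w a "nat k"] by auto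

lemma homog_signof_mult: "homog w P d \<Longrightarrow> homog w (signof p * P) d"
proof -
  assume h: "homog w P d"
  have "signof p * P = P \<or> signof p * P = - P"
    using signof_pm_one[of p] by (metis insertE mult_1 mult_minus1 singletonD)
  then show ?thesis using h homog_uminus by metis
qed

lemma homog_det:
  assumes "\<And>i j. i < n \<Longrightarrow> j < n \<Longrightarrow> homog w (f i j) (r i + c j)"
  shows "homog w (det (mat n n (\<lambda>(i, j). f i j))) (\<Sum>i<n. r i + c i)"
proof -
  have "det (mat n n (\<lambda>(i, j). f i j)) = (\<Sum>p\<in>{p. p permutes {0..<n}}. signof p * (\<Prod>i = 0..<n. f i (p i)))"
    by (simp add: det_def)
  also have "homog w \<dots> (\<Sum>i<n. r i + c i)"
  proof (rule homog_sum)
    fix p assume p: "p \<in> {p. p permutes {0..<n}}"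
    have "homog w (\<Prod>i = 0..<n. f i (p i)) (\<Sum>i = 0..<n. r i + c (p i))"
      by (rule homog_prod) (use p permutes_in_image in \<open>auto intro!: assms\<close>)
    moreover have "(\<Sum>i = 0..<n. c (p i)) = (\<Sum>i = 0..<n. c i)"
      using sum.permute[of p "{0..<n}" c] p by (simp add: comp_def)
    ultimately have "homog w (\<Prod>i = 0..<n. f i (p i)) (\<Sum>i<n. r i + c i)"
      by (simp add: sum.distrib atLeast0LessThan)
    then show "homog w (signof p * (\<Prod>i = 0..<n. f i (p i))) (\<Sum>i<n. r i + c i)"
      by (rule homog_signof_mult)
  qed
  finally show ?thesis .
qed

lemma homog_schur:
  assumes "graded w a"
  shows "homog w (schur l a) (int (sum_list l))"
proof -
  have "homog w (schur l a) (\<Sum>i<length l. (int (l ! i) - int i) + int i)"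
    unfolding schur_def
    by (rule homog_det) (use homog_hZ[OF assms] in simp)
  moreover have "(\<Sum>i<length l. (int (l ! i) - int i) + int i) = int (sum_list l)"
    by (simp add: sum_list_sum_nth atLeast0LessThan)
  ultimately show ?thesis by simp
qed

section \<open>Dilation\<close>

definition fdil :: "nat \<Rightarrow> 'a::comm_ring_1 fps \<Rightarrow> 'a fps" where
  "fdil p f = Abs_fps (\<lambda>k. if p dvd k then fps_nth f (k div p) else 0)"

lemma fdil_nth: "fps_nth (fdil p f) k = (if p dvd k then fps_nth f (k div p) else 0)"
  unfolding fdil_def by simp

lemma fdil_one: "p \<ge> 1 \<Longrightarrow> fdil p 1 = 1"
  by (rule fps_ext) (auto simp: fdil_nth elim!: dvdE)

lemma fdil_mult:
  assumes p: "p \<ge> 1"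
  shows "fdil p (f * g) = fdil p f * fdil p g"
proof (rule fps_ext)
  fix k
  have "fps_nth (fdil p f * fdil p g) k = (\<Sum>i=0..k. fps_nth (fdil p f) i * fps_nth (fdil p g) (k - i))"
    by (simp add: fps_mult_nth)
  show "fps_nth (fdil p (f * g)) k = fps_nth (fdil p f * fdil p g) k"
  proof (cases "p dvd k")
    case False
    have "fps_nth (fdil p f) i * fps_nth (fdil p g) (k - i) = 0" if "i \<in> {0..k}" for i
    proof -
      have "\<not> (p dvd i \<and> p dvd (k - i))"
        using False that by (metis atLeastAtMost_iff dvd_add le_add_diff_inverse)
      then show ?thesis by (auto simp: fdil_nth)
    qed
    then show ?thesis using False by (simp add: fps_mult_nth fdil_nth)
  next
    case True
    then obtain q where k: "k = p * q" by (auto elim: dvdE)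
    have "fps_nth (fdil p f * fdil p g) k = (\<Sum>i=0..k. if p dvd i then fps_nth f (i div p) * fps_nth g (q - i div p) else 0)"
    proof -
      have "fps_nth (fdil p f) i * fps_nth (fdil p g) (k - i) = (if p dvd i then fps_nth f (i div p) * fps_nth g (q - i div p) else 0)"
        if "i \<in> {0..k}" for i
      proof (cases "p dvd i")
        case True
        then obtain j where i: "i = p * j" by (auto elim: dvdE)
        have "j \<le> q" using that p unfolding i k by auto
        then have "k - i = p * (q - j)" unfolding i k by (simp add: diff_mult_distrib2)
        then show ?thesis using p i by (simp add: fdil_nth)
      qed (simp add: fdil_nth)
      then show ?thesis by (simp add: fps_mult_nth)
    qed
    also have "\<dots> = (\<Sum>i\<in>{i\<in>{0..k}. p dvd i}. fps_nth f (i div p) * fps_nth g (q - i div p))"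
      by (simp add: sum.inter_filter[symmetric])
    also have "{i\<in>{0..k}. p dvd i} = (\<lambda>j. p * j) ` {0..q}"
      using p unfolding k by (auto elim!: dvdE simp: image_def)
    also have "(\<Sum>i\<in>(\<lambda>j. p * j) ` {0..q}. fps_nth f (i div p) * fps_nth g (q - i div p)) = (\<Sum>j=0..q. fps_nth f j * fps_nth g (q - j))"
      using p by (subst sum.reindex) (auto simp: inj_on_def)
    also have "\<dots> = fps_nth (fdil p (f * g)) k"
      using p unfolding k by (simp add: fdil_nth fps_mult_nth)
    finally show ?thesis by simp
  qed
qed

lemma fdil_power: "p \<ge> 1 \<Longrightarrow> fdil p (f ^ n) = fdil p f ^ n"
  by (induction n) (simp_all add: fdil_one fdil_mult)

lemma gen_series_dilate: "p \<ge> 1 \<Longrightarrow> gen_series (dilate p a) = fdil p (gen_series a)"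
  by (rule fps_ext) (auto simp: gen_series_def dilate_def fdil_nth elim!: dvdE)

lemma hcomp_dilate:
  assumes p: "p \<ge> 1"
  shows "hcomp (dilate p a) k = (if p dvd k then hcomp a (k div p) else 0)"
proof -
  let ?S = "gen_series a"
  have "hcomp (dilate p a) k = (\<Sum>n\<le>k. pconst (inverse (fact n)) * fps_nth (fdil p (?S ^ n)) k)"
    unfolding hcomp_def gen_series_dilate[OF p] fdil_power[OF p] ..
  also have "\<dots> = (if p dvd k then (\<Sum>n\<le>k. pconst (inverse (fact n)) * fps_nth (?S ^ n) (k div p)) else 0)"
    by (simp add: fdil_nth)
  also have "(\<Sum>n\<le>k. pconst (inverse (fact n)) * fps_nth (?S ^ n) (k div p)) = hcomp a (k div p)"
  proof -
    have "fps_nth ?S 0 = 0" by (simp add: gen_series_def)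
    then have z: "fps_nth (?S ^ n) (k div p) = 0" if "k div p < n" for n
      using startsby_zero_power_prefix that by blast
    have "(\<Sum>n\<le>k. pconst (inverse (fact n)) * fps_nth (?S ^ n) (k div p))
        = (\<Sum>n\<le>k div p. pconst (inverse (fact n)) * fps_nth (?S ^ n) (k div p))"
      by (rule sum.mono_neutral_right) (auto simp: z div_le_dividend)
    then show ?thesis by (simp add: hcomp_def)
  qed
  finally show ?thesis by simp
qed

lemma hZ_dilate:
  assumes p: "p \<ge> 1"
  shows "hZ (dilate p a) k = (if int p dvd k then hZ a (k div int p) else 0)"
proof (cases "k < 0")
  case True
  then have "k div int p < 0" using p by (simp add: pos_imp_zdiv_neg_iff)
  then show ?thesis using True by (simp add: hZ_def)
next
  case False
  then obtain k' where k: "k = int k'" by (metis nonneg_eq_int not_less)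
  have "int p dvd int k' \<longleftrightarrow> p dvd k'" by simp
  moreover have "int k' div int p = int (k' div p)" by (simp add: zdiv_int)
  ultimately show ?thesis unfolding k hZ_def using hcomp_dilate[OF p] by simp
qed

section \<open>Determinant lemmas\<close>

lemma det_leibniz:
  "det (mat n n (\<lambda>(i, j). f i j)) = (\<Sum>p\<in>{p. p permutes {0..<n}}. signof p * (\<Prod>i = 0..<n. f i (p i)))"
proof -
  have "det (mat n n (\<lambda>(i, j). f i j)) = (\<Sum>p\<in>{p. p permutes {0..<n}}. signof p * (\<Prod>i = 0..<n. (mat n n (\<lambda>(i, j). f i j)) $$ (i, p i)))"
    by (simp add: det_def)
  also have "\<dots> = (\<Sum>p\<in>{p. p permutes {0..<n}}. signof p * (\<Prod>i = 0..<n. f i (p i)))"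
  proof (rule sum.cong[OF refl])
    fix p assume "p \<in> {p. p permutes {0..<n}}"
    then have p: "p permutes {0..<n}" by simp
    have "(\<Prod>i = 0..<n. (mat n n (\<lambda>(i, j). f i j)) $$ (i, p i)) = (\<Prod>i = 0..<n. f i (p i))"
      by (rule prod.cong[OF refl]) (use permutes_in_image[OF p] in auto)
    then show "signof p * (\<Prod>i = 0..<n. (mat n n (\<lambda>(i, j). f i j)) $$ (i, p i)) = signof p * (\<Prod>i = 0..<n. f i (p i))"
      by simp
  qed
  finally show ?thesis .
qed

lemma det_zero_crit:
  assumes "\<And>p. p permutes {0..<n} \<Longrightarrow> \<exists>i<n. f i (p i) = 0"
  shows "det (mat n n (\<lambda>(i, j). f i j)) = 0"
  unfolding det_leibniz
proof (rule sum.neutral, intro ballI)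
  fix p assume "p \<in> {p. p permutes {0..<n}}"
  then obtain i where "i < n" "f i (p i) = 0" using assms by auto
  then have "(\<Prod>i = 0..<n. f i (p i)) = 0" by (intro prod_zero) auto
  then show "signof p * (\<Prod>i = 0..<n. f i (p i)) = 0" by simp
qed

lemma det_perm_rows:
  assumes p: "p permutes {0..<n}"
  shows "det (mat n n (\<lambda>(i, j). f (p i) j)) = signof p * det (mat n n (\<lambda>(i, j). f i j))"
proof -
  have "det (mat n n (\<lambda>(i, j). (mat n n (\<lambda>(i, j). f i j)) $$ (p i, j))) = signof p * det (mat n n (\<lambda>(i, j). f i j))"
    by (rule det_permute_rows[OF _ p]) simp
  moreover have "mat n n (\<lambda>(i, j). (mat n n (\<lambda>(i, j). f i j)) $$ (p i, j)) = mat n n (\<lambda>(i, j). f (p i) j)"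
    by (rule eq_matI) (use permutes_in_image[OF p] in auto)
  ultimately show ?thesis by simp
qed

lemma det_perm_cols:
  assumes p: "p permutes {0..<n}"
  shows "det (mat n n (\<lambda>(i, j). f i (p j))) = signof p * det (mat n n (\<lambda>(i, j). f i j))"
proof -
  have t: "det (mat n n (\<lambda>(i, j). g i j)) = det (mat n n (\<lambda>(i, j). g j i))" for g :: "nat \<Rightarrow> nat \<Rightarrow> 'a::comm_ring_1"
  proof -
    have "det (mat n n (\<lambda>(i, j). g i j)) = det (transpose_mat (mat n n (\<lambda>(i, j). g i j)))"
      using det_transpose[of "mat n n (\<lambda>(i, j). g i j)" n] by simp
    moreover have "transpose_mat (mat n n (\<lambda>(i, j). g i j)) = mat n n (\<lambda>(i, j). g j i)"
      by (rule eq_matI) auto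
    ultimately show ?thesis by simp
  qed
  show ?thesis
    using t[of "\<lambda>i j. f i (p j)"] t[of f] det_perm_rows[OF p, of "\<lambda>i j. f j i"] by simp
qed

lemma perm_between:
  fixes n :: nat
  assumes e: "bij_betw e {0..<n} U" and e': "bij_betw e' {0..<n} U"
  obtains q where "q permutes {0..<n}" "\<And>i. i < n \<Longrightarrow> e' i = e (q i)"
proof -
  define q where "q i = (if i < n then the_inv_into {0..<n} e (e' i) else i)" for i
  have bq: "bij_betw q {0..<n} {0..<n}"
  proof -
    have "bij_betw (the_inv_into {0..<n} e \<circ> e') {0..<n} {0..<n}"
      using bij_betw_trans[OF e' bij_betw_the_inv_into[OF e]] .
    moreover have "bij_betw q {0..<n} {0..<n} = bij_betw (the_inv_into {0..<n} e \<circ> e') {0..<n} {0..<n}"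
      by (rule bij_betw_cong) (auto simp: q_def)
    ultimately show ?thesis by simp
  qed
  have "q permutes {0..<n}" by (rule bij_imp_permutes[OF bq]) (auto simp: q_def)
  moreover have "e' i = e (q i)" if "i < n" for i
  proof -
    have "e' i \<in> U" using e' that by (auto simp: bij_betw_def)
    then show ?thesis using that e by (simp add: q_def f_the_inv_into_f_bij_betw)
  qed
  ultimately show ?thesis using that by blast
qed

lemma det_pair_reindex:
  assumes e: "bij_betw e {0..<n} U" and e': "bij_betw e' {0..<n} U"
      and g: "bij_betw g {0..<n} V" and g': "bij_betw g' {0..<n} V"
  shows "det (mat n n (\<lambda>(i, j). F (e' i) (g' j))) * det (mat n n (\<lambda>(i, j). G (e' i) (g' j)))
       = det (mat n n (\<lambda>(i, j). F (e i) (g j))) * det (mat n n (\<lambda>(i, j). (G (e i) (g j) :: 'a::comm_ring_1)))"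
proof -
  obtain q where q: "q permutes {0..<n}" "\<And>i. i < n \<Longrightarrow> e' i = e (q i)" using perm_between[OF e e'] by blast
  obtain r where r: "r permutes {0..<n}" "\<And>i. i < n \<Longrightarrow> g' i = g (r i)" using perm_between[OF g g'] by blast
  have X: "det (mat n n (\<lambda>(i, j). H (e' i) (g' j))) = signof q * signof r * det (mat n n (\<lambda>(i, j). H (e i) (g j)))"
    for H :: "_ \<Rightarrow> _ \<Rightarrow> 'a"
  proof -
    have "mat n n (\<lambda>(i, j). H (e' i) (g' j)) = mat n n (\<lambda>(i, j). H (e (q i)) (g (r j)))"
      by (rule eq_matI) (auto simp: q r)
    then have "det (mat n n (\<lambda>(i, j). H (e' i) (g' j))) = signof q * det (mat n n (\<lambda>(i, j). H (e i) (g (r j))))"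
      using det_perm_rows[OF q(1), of "\<lambda>i j. H (e i) (g (r j))"] by simp
    also have "\<dots> = signof q * (signof r * det (mat n n (\<lambda>(i, j). H (e i) (g j))))"
      using det_perm_cols[OF r(1), of "\<lambda>i j. H (e i) (g j)"] by simp
    finally show ?thesis by simp
  qed
  have s0: "(sign q * sign q) * (sign r * sign r) = (1::int)" by simp
  have s: "(signof q * signof r) * (signof q * signof r) = (1::'a)"
  proof -
    have a: "(of_int (sign q) :: 'a) * of_int (sign q) = 1" by (simp flip: of_int_mult)
    have b: "(of_int (sign r) :: 'a) * of_int (sign r) = 1" by (simp flip: of_int_mult)
    have "(signof q * signof r) * (signof q * signof r) = ((signof q * signof q) * (signof r * signof r) :: 'a)"
      by (simp only: ac_simps)
    then show ?thesis using a b by simp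
  qed
  have "(signof q * signof r * det (mat n n (\<lambda>(i, j). F (e i) (g j)))) * (signof q * signof r * det (mat n n (\<lambda>(i, j). G (e i) (g j))))
     = ((signof q * signof r) * (signof q * signof r)) * (det (mat n n (\<lambda>(i, j). F (e i) (g j))) * det (mat n n (\<lambda>(i, j). G (e i) (g j))))"
    by (simp add: ac_simps)
  then show ?thesis unfolding X[of F] X[of G] s by simp
qed

lemma shift_perm:
  fixes n1 n2 :: nat
  assumes b: "b permutes {0..<n2}"
  defines "t \<equiv> (\<lambda>x. if x \<in> {n1..<n1+n2} then n1 + b (x - n1) else x)"
  shows "t permutes {n1..<n1+n2}" "sign t = sign b"
proof -
  have bij: "bij_betw (\<lambda>x. n1 + x) {0..<n2} {n1..<n1+n2}"
    by (rule bij_betwI[of _ _ _ "\<lambda>x. x - n1"]) auto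
  interpret pb: permutes_bij_finite b "{0..<n2}" "{n1..<n1+n2}" "\<lambda>x. n1 + x" "\<lambda>x. x - n1" t
    by unfold_locales (use b bij in \<open>auto simp: t_def intro!: eq_reflection\<close>)
  show "t permutes {n1..<n1+n2}" "sign t = sign b"
    using pb.permutes_p' pb.sign_p' by simp_all
qed

lemma det_block2:
  fixes f :: "nat \<Rightarrow> nat \<Rightarrow> 'a::comm_ring_1" and n1 n2 :: nat
  assumes z: "\<And>i j. i < n1 + n2 \<Longrightarrow> j < n1 + n2 \<Longrightarrow> (i < n1) \<noteq> (j < n1) \<Longrightarrow> f i j = 0"
  shows "det (mat (n1+n2) (n1+n2) (\<lambda>(i, j). f i j))
       = det (mat n1 n1 (\<lambda>(i, j). f i j)) * det (mat n2 n2 (\<lambda>(i, j). f (n1+i) (n1+j)))"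
proof -
  define n where "n = n1 + n2"
  define T where "T = (\<lambda>(a::nat\<Rightarrow>nat, b::nat\<Rightarrow>nat) x. if x < n1 then a x else if x < n then n1 + b (x - n1) else x)"
  define S1 where "S1 = {a. a permutes {0..<n1}}"
  define S2 where "S2 = {b. b permutes {0..<n2}}"
  define Sn where "Sn = {s. s permutes {0..<n}}"
  define S' where "S' = {s \<in> Sn. \<forall>i<n1. s i < n1}"
  define h where "h s = signof s * (\<Prod>i = 0..<n. f i (s i))" for s
  have fin1: "finite S1" and fin2: "finite S2" and finn: "finite Sn"
    unfolding S1_def S2_def Sn_def by (simp_all add: finite_permutations)
  have Tprop: "T (a, b) permutes {0..<n} \<and> sign (T (a, b)) = sign a * sign b" if a: "a \<in> S1" and b: "b \<in> S2" for a b
  proof -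
    define t where "t = (\<lambda>x. if x \<in> {n1..<n1+n2} then n1 + b (x - n1) else x)"
    have a': "a permutes {0..<n1}" and b': "b permutes {0..<n2}" using a b by (simp_all add: S1_def S2_def)
    have t: "t permutes {n1..<n1+n2}" "sign t = sign b" using shift_perm[OF b'] unfolding t_def by simp_all
    have eq: "T (a, b) = a \<circ> t"
    proof
      fix x
      show "T (a, b) x = (a \<circ> t) x"
      proof (cases "x < n1")
        case True
        then show ?thesis by (simp add: T_def t_def)
      next
        case False
        then have "a (t x) = t x" using permutes_not_in[OF a'] t(1) permutes_in_image[OF t(1)] False
          by (metis atLeastLessThan_iff linorder_not_le t_def)
        then show ?thesis using False by (simp add: T_def t_def n_def)
      qed
    qed
    have "a permutes {0..<n}" by (rule permutes_subset[OF a']) (auto simp: n_def)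
    moreover have "t permutes {0..<n}" by (rule permutes_subset[OF t(1)]) (auto simp: n_def)
    ultimately have "a \<circ> t permutes {0..<n}" by (rule permutes_compose[rotated])
    moreover have "sign (a \<circ> t) = sign a * sign b"
      using sign_compose[OF permutes_imp_permutation[OF _ a'] permutes_imp_permutation[OF _ t(1)]] t(2) by simp
    ultimately show ?thesis using eq by simp
  qed
  have inj: "inj_on T (S1 \<times> S2)"
  proof (rule inj_onI, clarify)
    fix a b a' b' assume ab: "a \<in> S1" "b \<in> S2" "a' \<in> S1" "b' \<in> S2" and eq: "T (a, b) = T (a', b')"
    have pa: "a permutes {0..<n1}" "a' permutes {0..<n1}" and pb: "b permutes {0..<n2}" "b' permutes {0..<n2}"
      using ab by (simp_all add: S1_def S2_def)
    show "a = a' \<and> b = b'"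
    proof
      show "a = a'"
      proof
        fix x show "a x = a' x"
        proof (cases "x < n1")
          case True then show ?thesis using fun_cong[OF eq, of x] by (simp add: T_def)
        next
          case False then show ?thesis using permutes_not_in[OF pa(1)] permutes_not_in[OF pa(2)] by simp
        qed
      qed
      show "b = b'"
      proof
        fix y show "b y = b' y"
        proof (cases "y < n2")
          case True then show ?thesis using fun_cong[OF eq, of "n1 + y"] by (simp add: T_def n_def)
        next
          case False then show ?thesis using permutes_not_in[OF pb(1)] permutes_not_in[OF pb(2)] by simp
        qed
      qed
    qed
  qed
  have img: "T ` (S1 \<times> S2) = S'"
  proof
    show "T ` (S1 \<times> S2) \<subseteq> S'"
    proof clarify
      fix a b assume a: "a \<in> S1" and b: "b \<in> S2"
      have "a i < n1" if "i < n1" for i using a that permutes_in_image[of a "{0..<n1}" i] by (simp add: S1_def)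
      then show "T (a, b) \<in> S'" using Tprop[OF a b] by (simp add: S'_def Sn_def T_def)
    qed
  next
    show "S' \<subseteq> T ` (S1 \<times> S2)"
    proof
      fix s assume "s \<in> S'"
      then have s: "s permutes {0..<n}" and low: "\<And>i. i < n1 \<Longrightarrow> s i < n1" by (auto simp: S'_def Sn_def)
      define a where "a x = (if x < n1 then s x else x)" for x
      define b where "b y = (if y < n2 then s (n1 + y) - n1 else y)" for y
      have im1: "s ` {0..<n1} = {0..<n1}"
        by (rule endo_inj_surj) (use low permutes_inj_on[OF s] in auto)
      have high: "n1 \<le> s x" if "n1 \<le> x" "x < n" for x
      proof (rule ccontr)
        assume "\<not> n1 \<le> s x"
        then have "s x \<in> s ` {0..<n1}" using im1 by auto
        then obtain y where "y < n1" "s y = s x" by auto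
        then show False using that permutes_inj[OF s] by (metis inj_eq not_le)
      qed
      have sn: "s x < n" if "x < n" for x using permutes_in_image[OF s, of x] that by simp
      have a: "a \<in> S1"
      proof -
        have "bij_betw a {0..<n1} {0..<n1}"
        proof -
          have "bij_betw s {0..<n1} {0..<n1}" using im1 permutes_inj_on[OF s] by (simp add: bij_betw_def)
          moreover have "bij_betw a {0..<n1} {0..<n1} = bij_betw s {0..<n1} {0..<n1}"
            by (rule bij_betw_cong) (simp add: a_def)
          ultimately show ?thesis by simp
        qed
        then show ?thesis unfolding S1_def by (auto intro!: bij_imp_permutes simp: a_def)
      qed
      have b: "b \<in> S2"
      proof -
        have inj: "inj_on b {0..<n2}"
        proof (rule inj_onI)
          fix x y assume "x \<in> {0..<n2}" "y \<in> {0..<n2}" "b x = b y"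
          then have "s (n1 + x) = s (n1 + y)" using high[of "n1 + x"] high[of "n1 + y"] by (simp add: b_def n_def)
          then show "x = y" using permutes_inj[OF s] by (simp add: inj_eq)
        qed
        have "b ` {0..<n2} \<subseteq> {0..<n2}"
        proof clarify
          fix y assume "y \<in> {0..<n2}"
          then have "s (n1 + y) < n1 + n2" using sn[of "n1 + y"] by (simp add: n_def)
          then show "b y \<in> {0..<n2}" using \<open>y \<in> {0..<n2}\<close> by (simp add: b_def)
        qed
        then have "b ` {0..<n2} = {0..<n2}" using inj by (intro endo_inj_surj) auto
        then have "bij_betw b {0..<n2} {0..<n2}" using inj by (simp add: bij_betw_def)
        then show ?thesis unfolding S2_def by (auto intro!: bij_imp_permutes simp: b_def)
      qed
      have "s = T (a, b)"
      proof
        fix x show "s x = T (a, b) x"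
        proof -
          consider "x < n1" | "n1 \<le> x" "x < n" | "n \<le> x" by linarith
          then show ?thesis
          proof cases
            case 1 then show ?thesis by (simp add: T_def a_def)
          next
            case 2
            then have "x - n1 < n2" "\<not> x < n1" "x < n" by (auto simp: n_def)
            then show ?thesis using high[of x] 2 by (simp add: T_def b_def)
          next
            case 3
            then have "\<not> x < n1" "\<not> x < n" by (auto simp: n_def)
            then show ?thesis using permutes_not_in[OF s, of x] by (simp add: T_def)
          qed
        qed
      qed
      then show "s \<in> T ` (S1 \<times> S2)" using a b by blast
    qed
  qed
  have "det (mat n n (\<lambda>(i, j). f i j)) = sum h Sn"
    unfolding det_leibniz h_def Sn_def ..
  also have "\<dots> = sum h S'"
  proof (rule sum.mono_neutral_right[OF finn])
    show "S' \<subseteq> Sn" by (auto simp: S'_def)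
    show "\<forall>s\<in>Sn - S'. h s = 0"
    proof
      fix s assume "s \<in> Sn - S'"
      then obtain i where i: "i < n1" "n1 \<le> s i" and s: "s permutes {0..<n}" by (auto simp: S'_def Sn_def not_less)
      have "s i < n" using permutes_in_image[OF s, of i] i by (simp add: n_def)
      then have "f i (s i) = 0" using i by (intro z) (auto simp: n_def)
      then have "(\<Prod>i = 0..<n. f i (s i)) = 0" using i by (intro prod_zero) (auto simp: n_def intro!: bexI[of _ i])
      then show "h s = 0" by (simp add: h_def)
    qed
  qed
  also have "\<dots> = sum (h \<circ> T) (S1 \<times> S2)"
    unfolding img[symmetric] by (rule sum.reindex[OF inj])
  also have "\<dots> = (\<Sum>(a, b)\<in>S1 \<times> S2. (signof a * (\<Prod>i = 0..<n1. f i (a i))) * (signof b * (\<Prod>i = 0..<n2. f (n1 + i) (n1 + b i))))"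
  proof (rule sum.cong[OF refl], clarify)
    fix a b assume a: "a \<in> S1" and b: "b \<in> S2"
    have pa: "a permutes {0..<n1}" using a by (simp add: S1_def)
    have "(\<Prod>i = 0..<n. f i (T (a, b) i)) = (\<Prod>i = 0..<n1. f i (T (a, b) i)) * (\<Prod>i = n1..<n1+n2. f i (T (a, b) i))"
      unfolding n_def by (rule prod.atLeastLessThan_concat[symmetric]) auto
    also have "(\<Prod>i = 0..<n1. f i (T (a, b) i)) = (\<Prod>i = 0..<n1. f i (a i))"
      by (rule prod.cong) (auto simp: T_def)
    also have "(\<Prod>i = n1..<n1+n2. f i (T (a, b) i)) = (\<Prod>i = 0..<n2. f (n1 + i) (n1 + b i))"
    proof -
      have "(\<Prod>i = n1..<n1+n2. f i (T (a, b) i)) = (\<Prod>i = 0+n1..<n2+n1. f i (T (a, b) i))"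
        by (simp add: add.commute)
      also have "\<dots> = (\<Prod>i = 0..<n2. f (i + n1) (T (a, b) (i + n1)))"
        by (rule prod.shift_bounds_nat_ivl)
      also have "\<dots> = (\<Prod>i = 0..<n2. f (n1 + i) (n1 + b i))"
        by (rule prod.cong) (auto simp: T_def n_def add.commute)
      finally show ?thesis .
    qed
    finally have "(\<Prod>i = 0..<n. f i (T (a, b) i)) = (\<Prod>i = 0..<n1. f i (a i)) * (\<Prod>i = 0..<n2. f (n1 + i) (n1 + b i))" .
    moreover have "sign (T (a, b)) = sign a * sign b" using Tprop[OF a b] by simp
    ultimately show "(h \<circ> T) (a, b) = (signof a * (\<Prod>i = 0..<n1. f i (a i))) * (signof b * (\<Prod>i = 0..<n2. f (n1 + i) (n1 + b i)))"
      by (simp add: h_def ac_simps)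
  qed
  also have "\<dots> = (\<Sum>a\<in>S1. signof a * (\<Prod>i = 0..<n1. f i (a i))) * (\<Sum>b\<in>S2. signof b * (\<Prod>i = 0..<n2. f (n1 + i) (n1 + b i)))"
    by (simp add: sum_product sum.cartesian_product)
  also have "\<dots> = det (mat n1 n1 (\<lambda>(i, j). f i j)) * det (mat n2 n2 (\<lambda>(i, j). f (n1+i) (n1+j)))"
    unfolding det_leibniz S1_def S2_def ..
  finally show ?thesis unfolding n_def .
qed

lemma det_blockdiag:
  fixes f :: "nat \<Rightarrow> nat \<Rightarrow> 'a::comm_ring_1" and K :: nat
  assumes "\<And>s t. s < q * K \<Longrightarrow> t < q * K \<Longrightarrow> s div K \<noteq> t div K \<Longrightarrow> f s t = 0"
  shows "det (mat (q * K) (q * K) (\<lambda>(s, t). f s t)) = (\<Prod>c<q. det (mat K K (\<lambda>(i, j). f (c * K + i) (c * K + j))))"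
  using assms
proof (induction q)
  case 0
  then show ?case by (simp add: det_dim_zero)
next
  case (Suc q)
  have z: "f i j = 0" if "i < q * K + K" "j < q * K + K" "(i < q * K) \<noteq> (j < q * K)" for i j
  proof -
    have K: "K > 0" using that by (cases K) auto
    have "i div K \<noteq> j div K"
    proof -
      { fix x y assume "x < q * K" "q * K \<le> y"
        then have "x div K < q" by (simp add: less_mult_imp_div_less)
        moreover have "q \<le> y div K" using \<open>q * K \<le> y\<close> K by (metis div_le_mono nonzero_mult_div_cancel_right not_gr0)
        ultimately have "x div K \<noteq> y div K" by simp }
      then show ?thesis using that by (metis not_less)
    qed
    then show ?thesis using Suc.prems that by (simp add: add.commute)
  qed
  have "det (mat (Suc q * K) (Suc q * K) (\<lambda>(s, t). f s t)) = det (mat (q * K + K) (q * K + K) (\<lambda>(s, t). f s t))"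
    by (simp add: add.commute)
  also have "\<dots> = det (mat (q * K) (q * K) (\<lambda>(s, t). f s t)) * det (mat K K (\<lambda>(i, j). f (q * K + i) (q * K + j)))"
    by (rule det_block2) (rule z)
  also have "det (mat (q * K) (q * K) (\<lambda>(s, t). f s t)) = (\<Prod>c<q. det (mat K K (\<lambda>(i, j). f (c * K + i) (c * K + j))))"
    by (rule Suc.IH) (use Suc.prems in auto)
  finally show ?case by (simp add: ac_simps)
qed

definition pad :: "nat list \<Rightarrow> nat \<Rightarrow> nat" where
  "pad l i = (if i < length l then l ! i else 0)"

lemma perm_fix_tail:
  fixes L l :: nat
  assumes s: "s permutes {0..<L}" and ge: "\<And>i. l \<le> i \<Longrightarrow> i < L \<Longrightarrow> i \<le> s i"
  shows "s permutes {0..<l}"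
proof -
  let ?B = "{l..<L}"
  have sub: "s ` ?B \<subseteq> ?B"
  proof
    fix y assume "y \<in> s ` ?B"
    then obtain i where i: "i \<in> ?B" "y = s i" by auto
    then have "s i < L" using permutes_in_image[OF s, of i] by auto
    then show "y \<in> ?B" using i ge[of i] by auto
  qed
  have img: "s ` ?B = ?B" by (rule endo_inj_surj[OF _ sub]) (use permutes_inj_on[OF s] in auto)
  have fixd: "s i = i" if "i \<in> ?B" for i
  proof (rule ccontr)
    assume ne: "s i \<noteq> i"
    then have lt: "i < s i" using ge[of i] that by auto
    have "sum (\<lambda>i. i) ?B < sum s ?B"
      by (rule sum_strict_mono_ex1) (use ge lt that in auto)
    moreover have "sum s ?B = sum (\<lambda>i. i) ?B"
    proof -
      have "sum (\<lambda>i. i) (s ` ?B) = sum ((\<lambda>i. i) \<circ> s) ?B"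
        by (rule sum.reindex) (use permutes_inj_on[OF s] in auto)
      then show ?thesis using img by simp
    qed
    ultimately show False by simp
  qed
  show ?thesis
    unfolding permutes_def
  proof
    show "\<forall>x. x \<notin> {0..<l} \<longrightarrow> s x = x"
    proof (intro allI impI)
      fix x assume "x \<notin> {0..<l}"
      then show "s x = x" using fixd[of x] permutes_not_in[OF s, of x] by (cases "x < L") auto
    qed
    show "\<forall>y. \<exists>!x. s x = y" using s unfolding permutes_def by blast
  qed
qed

lemma schur_pad:
  assumes len: "length l \<le> L"
  shows "schur l a = det (mat L L (\<lambda>(i, j). hZ a (int (pad l i) - int i + int j)))"
proof -
  let ?l = "length l"
  let ?F = "\<lambda>i j. hZ a (int (pad l i) - int i + int j)"
  have "det (mat L L (\<lambda>(i, j). ?F i j)) = (\<Sum>s\<in>{s. s permutes {0..<L}}. signof s * (\<Prod>i = 0..<L. ?F i (s i)))"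
    by (rule det_leibniz)
  also have "\<dots> = (\<Sum>s\<in>{s. s permutes {0..<?l}}. signof s * (\<Prod>i = 0..<L. ?F i (s i)))"
  proof (rule sum.mono_neutral_right)
    show "finite {s. s permutes {0..<L}}" by (simp add: finite_permutations)
    show "{s. s permutes {0..<?l}} \<subseteq> {s. s permutes {0..<L}}"
      using len by (auto intro: permutes_subset)
    show "\<forall>s\<in>{s. s permutes {0..<L}} - {s. s permutes {0..<?l}}. signof s * (\<Prod>i = 0..<L. ?F i (s i)) = 0"
    proof
      fix s assume "s \<in> {s. s permutes {0..<L}} - {s. s permutes {0..<?l}}"
      then have s: "s permutes {0..<L}" and ns: "\<not> s permutes {0..<?l}" by auto
      obtain i where i: "?l \<le> i" "i < L" "s i < i" using perm_fix_tail[OF s] ns by (meson not_le)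
      have "?F i (s i) = 0" using i by (intro hZ_neg) (simp add: pad_def)
      then have "(\<Prod>i = 0..<L. ?F i (s i)) = 0" using i by (intro prod_zero) auto
      then show "signof s * (\<Prod>i = 0..<L. ?F i (s i)) = 0" by simp
    qed
  qed
  also have "\<dots> = (\<Sum>s\<in>{s. s permutes {0..<?l}}. signof s * (\<Prod>i = 0..<?l. hZ a (int (l ! i) - int i + int (s i))))"
  proof (rule sum.cong[OF refl])
    fix s assume "s \<in> {s. s permutes {0..<?l}}"
    then have s: "s permutes {0..<?l}" by simp
    have "(\<Prod>i = 0..<L. ?F i (s i)) = (\<Prod>i = 0..<?l. ?F i (s i)) * (\<Prod>i = ?l..<L. ?F i (s i))"
      using len by (simp add: prod.atLeastLessThan_concat)
    also have "(\<Prod>i = ?l..<L. ?F i (s i)) = 1"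
      by (rule prod.neutral) (use permutes_not_in[OF s] in \<open>auto simp: pad_def\<close>)
    also have "(\<Prod>i = 0..<?l. ?F i (s i)) = (\<Prod>i = 0..<?l. hZ a (int (l ! i) - int i + int (s i)))"
      by (rule prod.cong) (auto simp: pad_def)
    finally show "signof s * (\<Prod>i = 0..<L. ?F i (s i)) = signof s * (\<Prod>i = 0..<?l. hZ a (int (l ! i) - int i + int (s i)))"
      by simp
  qed
  also have "\<dots> = schur l a"
    unfolding schur_def det_leibniz ..
  finally show ?thesis by simp
qed

section \<open>Partitions as sets\<close>

definition useq :: "nat \<Rightarrow> nat \<Rightarrow> nat list \<Rightarrow> nat \<Rightarrow> nat" where
  "useq L off l i = pad l i + (L - 1 - i) + off"

definition vac :: "nat \<Rightarrow> nat \<Rightarrow> nat \<Rightarrow> nat" where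
  "vac L off j = (L - 1 - j) + off"

definition uset :: "nat \<Rightarrow> nat \<Rightarrow> nat list \<Rightarrow> nat set" where
  "uset L off l = useq L off l ` {0..<L}"

definition enum :: "nat set \<Rightarrow> nat \<Rightarrow> nat" where
  "enum U i = sorted_list_of_set U ! (card U - 1 - i)"

definition part :: "nat \<Rightarrow> nat \<Rightarrow> nat set \<Rightarrow> nat list" where
  "part L off U = filter (\<lambda>x. 0 < x) (map (\<lambda>i. enum U i - (L - 1 - i) - off) [0..<L])"

definition PL :: "nat \<Rightarrow> nat list set" where
  "PL K = {l. is_partition l \<and> length l \<le> K}"

lemma pad_mono: "is_partition l \<Longrightarrow> i \<le> j \<Longrightarrow> pad l j \<le> pad l i"
  unfolding is_partition_def pad_def
  by (auto simp: sorted_wrt_iff_nth_less dest: le_neq_implies_less)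

lemma useq_strict: "is_partition l \<Longrightarrow> i < j \<Longrightarrow> j < L \<Longrightarrow> useq L off l j < useq L off l i"
  using pad_mono[of l i j] unfolding useq_def by auto

lemma vac_le_useq: "vac L off i \<le> useq L off l i"
  unfolding vac_def useq_def by simp

lemma strict_dec_inj: fixes L :: nat shows "(\<And>i j. i < j \<Longrightarrow> j < L \<Longrightarrow> h j < (h i::nat)) \<Longrightarrow> inj_on h {0..<L}"
proof (rule inj_onI)
  fix x y assume d: "\<And>i j. i < j \<Longrightarrow> j < L \<Longrightarrow> h j < (h i::nat)" and "x \<in> {0..<L}" "y \<in> {0..<L}" "h x = h y"
  then show "x = y" using d[of x y] d[of y x] by (cases x y rule: linorder_cases) auto
qed

lemma enum_image:
  assumes dec: "\<And>i j. i < j \<Longrightarrow> j < L \<Longrightarrow> h j < (h i::nat)" and i: "i < L"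
  shows "enum (h ` {0..<L}) i = h i"
proof -
  have inj: "inj_on h {0..<L}" by (rule strict_dec_inj[OF dec])
  then have card: "card (h ` {0..<L}) = L" by (simp add: card_image)
  let ?xs = "map (\<lambda>k. h (L - 1 - k)) [0..<L]"
  have "sorted_wrt (<) ?xs"
    unfolding sorted_wrt_iff_nth_less by (auto intro!: dec)
  moreover have "set ?xs = h ` {0..<L}"
  proof
    show "set ?xs \<subseteq> h ` {0..<L}" by auto
    show "h ` {0..<L} \<subseteq> set ?xs"
    proof
      fix y assume "y \<in> h ` {0..<L}"
      then obtain j where "j < L" "y = h j" by auto
      then show "y \<in> set ?xs" by (auto simp: image_def intro!: bexI[of _ "L - 1 - j"])
    qed
  qed
  moreover have "length ?xs = card (h ` {0..<L})" using card by simp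
  ultimately have "sorted_list_of_set (h ` {0..<L}) = ?xs"
    using sorted_list_of_set_unique[of "h ` {0..<L}" ?xs] by simp
  then show ?thesis using i card by (simp add: enum_def)
qed

lemma enum_props:
  assumes fin: "finite U" and card: "card U = L"
  shows "\<And>i j. i < j \<Longrightarrow> j < L \<Longrightarrow> enum U j < enum U i" and "enum U ` {0..<L} = U"
proof -
  let ?xs = "sorted_list_of_set U"
  have xs: "sorted_wrt (<) ?xs" "set ?xs = U" "length ?xs = L"
    using fin card by (simp_all add: strict_sorted_list_of_set set_sorted_list_of_set length_sorted_list_of_set)
  show "enum U j < enum U i" if "i < j" "j < L" for i j
    using that xs card unfolding enum_def by (auto intro!: sorted_wrt_nth_less[OF xs(1)])
  show "enum U ` {0..<L} = U"
  proof
    show "enum U ` {0..<L} \<subseteq> U" using xs card by (auto simp: enum_def)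
    show "U \<subseteq> enum U ` {0..<L}"
    proof
      fix u assume "u \<in> U"
      then obtain k where k: "k < L" "?xs ! k = u" using xs by (metis in_set_conv_nth)
      then have "enum U (L - 1 - k) = u" using card by (simp add: enum_def)
      then show "u \<in> enum U ` {0..<L}" using k by (auto simp: image_def intro!: bexI[of _ "L - 1 - k"])
    qed
  qed
qed

lemma pad_filter:
  assumes "sorted_wrt (\<ge>) ys" "i < length ys"
  shows "pad (filter (\<lambda>x. 0 < x) ys) i = ys ! (i::nat)"
  using assms
proof (induction ys arbitrary: i)
  case Nil then show ?case by simp
next
  case (Cons y ys)
  show ?case
  proof (cases "0 < y")
    case True
    show ?thesis
    proof (cases i)
      case 0 then show ?thesis using True by (simp add: pad_def)
    next
      case (Suc i')
      then have "pad (filter (\<lambda>x. 0 < x) ys) i' = ys ! i'" using Cons by auto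
      moreover have "pad (y # filter (\<lambda>x. 0 < x) ys) (Suc i') = pad (filter (\<lambda>x. 0 < x) ys) i'"
        by (simp add: pad_def)
      ultimately show ?thesis using True Suc by simp
    qed
  next
    case False
    then have "\<forall>x\<in>set (y # ys). x = 0" using Cons.prems(1) by auto
    moreover have "(y # ys) ! i \<in> set (y # ys)" using Cons.prems(2) by (rule nth_mem)
    ultimately have "filter (\<lambda>x. 0 < x) (y # ys) = []" and "(y # ys) ! i = 0"
      by (auto simp: filter_empty_conv)
    then show ?thesis by (simp add: pad_def)
  qed
qed

lemma part_props:
  assumes fin: "finite U" and card: "card U = L" and ge: "U \<subseteq> {off..}"
  shows "part L off U \<in> PL L" and "uset L off (part L off U) = U"
proof -
  note ep = enum_props[OF fin card]
  have lb: "L - 1 - i + off \<le> enum U i" if "i < L" for i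
    using that
  proof (induction "L - 1 - i" arbitrary: i)
    case 0
    have "enum U i \<in> U" using ep(2) 0 by auto
    then show ?case using ge 0 by auto
  next
    case (Suc k)
    then have "Suc i < L" by simp
    then have "L - 1 - Suc i + off \<le> enum U (Suc i)" using Suc by simp
    moreover have "enum U (Suc i) < enum U i" using ep(1)[of i "Suc i"] \<open>Suc i < L\<close> by simp
    ultimately show ?case using Suc.hyps(2) by simp
  qed
  define f where "f i = enum U i - (L - 1 - i) - off" for i
  have fdec: "f j \<le> f i" if "i \<le> j" "j < L" for i j
  proof -
    have gen: "enum U (i + d) + d \<le> enum U i" if "i + d < L" for d
      using that
    proof (induction d)
      case 0 then show ?case by simp
    next
      case (Suc d)
      then have "enum U (i + d) + d \<le> enum U i" by simp
      moreover have "enum U (i + Suc d) < enum U (i + d)" using ep(1)[of "i + d" "i + Suc d"] Suc.prems by simp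
      ultimately show ?case by simp
    qed
    have "enum U j + (j - i) \<le> enum U i" using gen[of "j - i"] that by simp
    then show ?thesis using lb[of i] lb[of j] that unfolding f_def by linarith
  qed
  let ?ys = "map f [0..<L]"
  have sys: "sorted_wrt (\<ge>) ?ys"
    unfolding sorted_wrt_iff_nth_less by (auto intro!: fdec)
  have pe: "part L off U = filter (\<lambda>x. 0 < x) ?ys" unfolding part_def f_def ..
  show "part L off U \<in> PL L"
    unfolding PL_def is_partition_def pe by (auto simp: sorted_wrt_filter[OF sys] intro: order_trans[OF length_filter_le])
  have "useq L off (part L off U) i = enum U i" if "i < L" for i
  proof -
    have "pad (part L off U) i = f i" unfolding pe using pad_filter[OF sys, of i] that by simp
    then show ?thesis using lb[OF that] unfolding useq_def f_def by simp
  qed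
  then have "uset L off (part L off U) = enum U ` {0..<L}" unfolding uset_def by (intro image_cong) auto
  then show "uset L off (part L off U) = U" using ep(2) by simp
qed

lemma part_uset:
  assumes "l \<in> PL L"
  shows "part L off (uset L off l) = l"
proof -
  have pl: "is_partition l" and len: "length l \<le> L" using assms by (auto simp: PL_def)
  have e: "enum (uset L off l) i = useq L off l i" if "i < L" for i
    unfolding uset_def by (rule enum_image[OF useq_strict[OF pl] that])
  have "map (\<lambda>i. enum (uset L off l) i - (L - 1 - i) - off) [0..<L] = map (pad l) [0..<L]"
    by (rule map_cong) (auto simp: e useq_def)
  also have "map (pad l) [0..<L] = l @ replicate (L - length l) 0"
    by (rule nth_equalityI) (use len in \<open>auto simp: pad_def nth_append\<close>)
  finally have "part L off (uset L off l) = filter (\<lambda>x. 0 < x) (l @ replicate (L - length l) 0)"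
    unfolding part_def by simp
  also have "\<dots> = l"
  proof -
    have "\<forall>x\<in>set l. 0 < x" using pl unfolding is_partition_def by (metis gr0I)
    then show ?thesis by (simp add: filter_id_conv)
  qed
  finally show ?thesis .
qed




lemma schur_useq:
  assumes "length l \<le> L"
  shows "schur l a = det (mat L L (\<lambda>(i, j). hZ a (int (useq L off l i) - int (vac L off j))))"
proof -
  have "mat L L (\<lambda>(i, j). hZ a (int (useq L off l i) - int (vac L off j))) = mat L L (\<lambda>(i, j). hZ a (int (pad l i) - int i + int j))"
    by (rule eq_matI) (auto simp: useq_def vac_def of_nat_diff intro!: arg_cong[where f="hZ a"])
  then show ?thesis using schur_pad[OF assms] by simp
qed

lemma dvd_small_eq:
  fixes c c' p :: nat
  assumes "c < p" "c' < p" "int p dvd (int c - int c')"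
  shows "c = c'"
proof (rule ccontr)
  assume "c \<noteq> c'"
  then consider "c < c'" | "c' < c" by linarith
  then show False
  proof cases
    case 1
    then have "int p dvd (int c' - int c)" using assms(3) by (metis dvd_minus_iff minus_diff_eq)
    then have "int p \<le> int c' - int c" using 1 by (intro zdvd_imp_le) auto
    then show False using assms 1 by linarith
  next
    case 2
    then have "int p \<le> int c - int c'" using assms(3) by (intro zdvd_imp_le) auto
    then show False using assms 2 by linarith
  qed
qed

definition cls :: "nat \<Rightarrow> nat set \<Rightarrow> nat \<Rightarrow> nat set" where
  "cls p U c = {w. c + p * w \<in> U}"

lemma set_eq_cls:
  assumes p: "p \<ge> 1" and "\<And>c. c < p \<Longrightarrow> cls p U c = cls p W c"
  shows "U = W"
proof -
  have "x \<in> U \<longleftrightarrow> x \<in> W" for x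
  proof -
    have x: "x = x mod p + p * (x div p)" by simp
    have "x mod p < p" using p by simp
    then have "x div p \<in> cls p U (x mod p) \<longleftrightarrow> x div p \<in> cls p W (x mod p)" using assms(2) by simp
    then show ?thesis unfolding cls_def using x by simp
  qed
  then show ?thesis by blast
qed

lemma card_cls_sum:
  assumes p: "p \<ge> 1" and fin: "finite U"
  shows "card U = (\<Sum>c<p. card (cls p U c))"
proof -
  have fc: "finite (cls p U c)" for c
  proof -
    have "cls p U c \<subseteq> (\<lambda>x. (x - c) div p) ` U"
    proof
      fix w assume "w \<in> cls p U c"
      then have "c + p * w \<in> U" "(c + p * w - c) div p = w" using p by (auto simp: cls_def)
      then show "w \<in> (\<lambda>x. (x - c) div p) ` U" by (metis image_eqI)
    qed
    then show ?thesis using fin finite_surj by blast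
  qed
  have "bij_betw (\<lambda>x. (x mod p, x div p)) U (SIGMA c:{..<p}. cls p U c)"
  proof (rule bij_betwI[of _ _ _ "\<lambda>(c, w). c + p * w"])
    show "(\<lambda>x. (x mod p, x div p)) \<in> U \<rightarrow> (SIGMA c:{..<p}. cls p U c)"
      using p by (auto simp: cls_def)
    show "(\<lambda>(c, w). c + p * w) \<in> (SIGMA c:{..<p}. cls p U c) \<rightarrow> U"
      by (auto simp: cls_def)
    show "(case (x mod p, x div p) of (c, w) \<Rightarrow> c + p * w) = x" for x by simp
    show "(\<lambda>x. (x mod p, x div p)) (case y of (c, w) \<Rightarrow> c + p * w) = y" if "y \<in> (SIGMA c:{..<p}. cls p U c)" for y
      using that by auto
  qed
  then have "card U = card (SIGMA c:{..<p}. cls p U c)" by (rule bij_betw_same_card)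
  also have "\<dots> = (\<Sum>c<p. card (cls p U c))" using fc by (simp add: card_SigmaI)
  finally show ?thesis .
qed

definition QI :: "(nat \<Rightarrow> 'a::comm_monoid_mult) \<Rightarrow> nat \<Rightarrow> nat \<Rightarrow> 'a" where
  "QI X a b = (\<Prod>y\<in>{a..<b}. X y)"

lemma prod_if_const:
  "finite A \<Longrightarrow> (\<Prod>i\<in>A. if P i then (c::'a::comm_monoid_mult) else 1) = c ^ card {i\<in>A. P i}"
  by (simp add: prod.inter_filter[symmetric])

lemma QI_exp:
  fixes e g :: "nat \<Rightarrow> nat"
  assumes e: "bij_betw e {0..<M} U" and g: "bij_betw g {0..<M} V"
      and ge: "\<And>i. i < M \<Longrightarrow> g i \<le> e i" and B: "\<And>u. u \<in> U \<Longrightarrow> u < B"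
  shows "(\<Prod>i<M. QI X (g i) (e i)) = (\<Prod>y<B. X y ^ (card {u\<in>U. y < u} - card {v\<in>V. y < v}))"
proof -
  have eB: "e i < B" if "i < M" for i using B e that by (auto simp: bij_betw_def)
  have "(\<Prod>i<M. QI X (g i) (e i)) = (\<Prod>i<M. \<Prod>y<B. if g i \<le> y \<and> y < e i then X y else 1)"
  proof (rule prod.cong[OF refl])
    fix i assume i: "i \<in> {..<M}"
    have "(\<Prod>y<B. if g i \<le> y \<and> y < e i then X y else 1) = (\<Prod>y\<in>{y\<in>{..<B}. g i \<le> y \<and> y < e i}. X y)"
      by (rule prod.inter_filter[symmetric]) simp
    also have "{y\<in>{..<B}. g i \<le> y \<and> y < e i} = {g i..<e i}"
    proof -
      have "e i < B" using eB i by simp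
      then show ?thesis by auto
    qed
    finally show "QI X (g i) (e i) = (\<Prod>y<B. if g i \<le> y \<and> y < e i then X y else 1)" by (simp add: QI_def)
  qed
  also have "\<dots> = (\<Prod>y<B. \<Prod>i<M. if g i \<le> y \<and> y < e i then X y else 1)"
    by (rule prod.swap)
  also have "\<dots> = (\<Prod>y<B. X y ^ (card {u\<in>U. y < u} - card {v\<in>V. y < v}))"
  proof (rule prod.cong[OF refl])
    fix y
    have "(\<Prod>i<M. if g i \<le> y \<and> y < e i then X y else 1) = X y ^ card {i\<in>{..<M}. g i \<le> y \<and> y < e i}"
      by (rule prod_if_const) simp
    moreover have "card {i\<in>{..<M}. g i \<le> y \<and> y < e i} = card {u\<in>U. y < u} - card {v\<in>V. y < v}"
    proof -
      have sub: "{i\<in>{..<M}. y < g i} \<subseteq> {i\<in>{..<M}. y < e i}" using ge by (auto intro: less_le_trans)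
      have "{i\<in>{..<M}. g i \<le> y \<and> y < e i} = {i\<in>{..<M}. y < e i} - {i\<in>{..<M}. y < g i}" by auto
      then have "card {i\<in>{..<M}. g i \<le> y \<and> y < e i} = card {i\<in>{..<M}. y < e i} - card {i\<in>{..<M}. y < g i}"
        using card_Diff_subset[OF _ sub] by simp
      moreover have "card {i\<in>{..<M}. y < e i} = card {u\<in>U. y < u}"
      proof -
        have "e ` {i\<in>{..<M}. y < e i} = {u\<in>U. y < u}" using e by (auto simp: bij_betw_def lessThan_atLeast0)
        moreover have "inj_on e {i\<in>{..<M}. y < e i}" using e by (auto simp: bij_betw_def lessThan_atLeast0 intro: inj_on_subset)
        ultimately show ?thesis by (metis card_image)
      qed
      moreover have "card {i\<in>{..<M}. y < g i} = card {v\<in>V. y < v}"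
      proof -
        have "g ` {i\<in>{..<M}. y < g i} = {v\<in>V. y < v}" using g by (auto simp: bij_betw_def lessThan_atLeast0)
        moreover have "inj_on g {i\<in>{..<M}. y < g i}" using g by (auto simp: bij_betw_def lessThan_atLeast0 intro: inj_on_subset)
        ultimately show ?thesis by (metis card_image)
      qed
      ultimately show ?thesis by simp
    qed
    ultimately show "(\<Prod>i<M. if g i \<le> y \<and> y < e i then X y else 1) = X y ^ (card {u\<in>U. y < u} - card {v\<in>V. y < v})"
      by simp
  qed
  finally show ?thesis .
qed

lemma QI_inv:
  fixes e g e' g' :: "nat \<Rightarrow> nat"
  assumes e: "bij_betw e {0..<M} U" and g: "bij_betw g {0..<M} V"
      and e': "bij_betw e' {0..<M} U" and g': "bij_betw g' {0..<M} V"
      and ge: "\<And>i. i < M \<Longrightarrow> g i \<le> e i" and ge': "\<And>i. i < M \<Longrightarrow> g' i \<le> e' i"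
  shows "(\<Prod>i<M. QI X (g i) (e i)) = (\<Prod>i<M. QI X (g' i) (e' i))"
proof -
  have "finite U" using e by (metis bij_betw_finite finite_atLeastLessThan)
  then obtain B where B: "\<And>u. u \<in> U \<Longrightarrow> u < B" by (metis finite_nat_set_iff_bounded)
  show ?thesis using QI_exp[OF e g ge B, of X] QI_exp[OF e' g' ge' B, of X] by simp
qed

lemma rho_part_QI:
  assumes len: "length l \<le> L'"
  shows "rho_part r l N = (\<Prod>i<L'. QI (\<lambda>y. r (int y + (N - int L' + 1 - int off))) (vac L' off i) (useq L' off l i))"
proof -
  let ?X = "\<lambda>y. r (int y + (N - int L' + 1 - int off))"
  have row: "QI ?X (vac L' off i) (useq L' off l i) = (\<Prod>j<pad l i. r (N + int j - int i))" if i: "i < L'" for i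
  proof -
    have "QI ?X (vac L' off i) (useq L' off l i) = (\<Prod>y\<in>{0 + vac L' off i..<pad l i + vac L' off i}. ?X y)"
      by (simp add: QI_def useq_def vac_def add.commute add.left_commute)
    also have "\<dots> = (\<Prod>j\<in>{0..<pad l i}. ?X (j + vac L' off i))"
      by (rule prod.shift_bounds_nat_ivl)
    also have "\<dots> = (\<Prod>j<pad l i. r (N + int j - int i))"
      using i by (intro prod.cong) (auto simp: vac_def of_nat_diff algebra_simps)
    finally show ?thesis .
  qed
  have "(\<Prod>i<L'. QI ?X (vac L' off i) (useq L' off l i)) = (\<Prod>i<L'. \<Prod>j<pad l i. r (N + int j - int i))"
    by (rule prod.cong) (auto simp: row)
  also have "\<dots> = (\<Prod>i<length l. \<Prod>j<pad l i. r (N + int j - int i))"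
    by (rule prod.mono_neutral_right) (use len in \<open>auto simp: pad_def\<close>)
  also have "\<dots> = rho_part r l N"
    unfolding rho_part_def by (rule prod.cong) (auto simp: pad_def)
  finally show ?thesis by simp
qed

locale setting =
  fixes p K i0 :: nat
  assumes p: "1 \<le> p" and K: "1 \<le> K" and i0: "1 \<le> i0" "i0 \<le> p"
begin

definition del :: "nat \<Rightarrow> nat" where "del c = (if c < i0 then 1 else 0)"

definition eblk :: "(nat \<Rightarrow> nat list) \<Rightarrow> nat \<Rightarrow> nat" where
  "eblk mu s = s div K + p * useq K (del (s div K)) (mu (s div K)) (s mod K)"

abbreviation "L \<equiv> p * K"

lemma blk_div: "c < p \<Longrightarrow> i < K \<Longrightarrow> (c * K + i) div K = c" and blk_mod: "i < K \<Longrightarrow> (c * K + i) mod K = i"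
  by simp_all

lemma blk_lt: "s < L \<Longrightarrow> s div K < p"
  by (simp add: less_mult_imp_div_less mult.commute)

lemma eblk_blk: "c < p \<Longrightarrow> i < K \<Longrightarrow> eblk mu (c * K + i) = c + p * useq K (del c) (mu c) i"
  unfolding eblk_def by simp

lemma cp_mod: "c < p \<Longrightarrow> (c + p * w) mod p = c" and cp_div: "c < p \<Longrightarrow> (c + p * w) div p = w"
  by simp_all

lemma eblk_inj:
  assumes mu: "\<And>c. c < p \<Longrightarrow> is_partition (mu c)"
  shows "inj_on (eblk mu) {0..<L}"
proof (rule inj_onI)
  fix s t assume s: "s \<in> {0..<L}" and t: "t \<in> {0..<L}" and eq: "eblk mu s = eblk mu t"
  have cs: "s div K < p" and ct: "t div K < p" using s t blk_lt by auto
  have "s div K = t div K" using arg_cong[OF eq, of "\<lambda>x. x mod p"] cs ct unfolding eblk_def by simp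
  moreover have eq2: "useq K (del (s div K)) (mu (s div K)) (s mod K) = useq K (del (t div K)) (mu (t div K)) (t mod K)"
    using arg_cong[OF eq, of "\<lambda>x. x div p"] cs ct unfolding eblk_def by simp
  ultimately have eq3: "useq K (del (s div K)) (mu (s div K)) (s mod K) = useq K (del (s div K)) (mu (s div K)) (t mod K)"
    by simp
  have inj: "inj_on (useq K (del (s div K)) (mu (s div K))) {0..<K}"
    by (rule strict_dec_inj) (rule useq_strict[OF mu[OF cs]])
  have "s mod K = t mod K"
    by (rule inj_onD[OF inj eq3]) (use K in auto)
  then show "s = t" using \<open>s div K = t div K\<close> by (metis div_mult_mod_eq)
qed

lemma cls_eblk:
  assumes c: "c < p"
  shows "cls p (eblk mu ` {0..<L}) c = uset K (del c) (mu c)"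
proof
  show "cls p (eblk mu ` {0..<L}) c \<subseteq> uset K (del c) (mu c)"
  proof
    fix w assume "w \<in> cls p (eblk mu ` {0..<L}) c"
    then obtain s where s: "s < L" "c + p * w = eblk mu s" by (auto simp: cls_def)
    have cs: "s div K < p" using s blk_lt by auto
    have "s div K = c" using arg_cong[OF s(2), of "\<lambda>x. x mod p"] cs c unfolding eblk_def by simp
    moreover have "w = useq K (del (s div K)) (mu (s div K)) (s mod K)"
      using arg_cong[OF s(2), of "\<lambda>x. x div p"] cs c unfolding eblk_def by simp
    moreover have "s mod K < K" using K by simp
    ultimately show "w \<in> uset K (del c) (mu c)" by (auto simp: uset_def)
  qed
  show "uset K (del c) (mu c) \<subseteq> cls p (eblk mu ` {0..<L}) c"
  proof
    fix w assume "w \<in> uset K (del c) (mu c)"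
    then obtain i where i: "i < K" "w = useq K (del c) (mu c) i" by (auto simp: uset_def)
    have "c * K + i < L"
    proof -
      have "c * K + i < c * K + K" using i by simp
      also have "\<dots> = Suc c * K" by simp
      also have "\<dots> \<le> p * K" using c by (intro mult_right_mono) auto
      finally show ?thesis .
    qed
    moreover have "eblk mu (c * K + i) = c + p * w" using eblk_blk[OF c i(1)] i by simp
    ultimately show "w \<in> cls p (eblk mu ` {0..<L}) c" unfolding cls_def by (auto simp: image_def intro!: bexI[of _ "c * K + i"])
  qed
qed

lemma blk_bound: "c < p \<Longrightarrow> i < K \<Longrightarrow> c * K + i < L"
proof -
  assume c: "c < p" and i: "i < K"
  have "c * K + i < c * K + K" using i by simp
  also have "\<dots> = Suc c * K" by simp
  also have "\<dots> \<le> p * K" using c by (intro mult_right_mono) auto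
  finally show ?thesis .
qed

lemma eblk_ge: "s < L \<Longrightarrow> i0 \<le> eblk mu s"
proof -
  assume s: "s < L"
  define c where "c = s div K"
  have c: "c < p" using blk_lt[OF s] by (simp add: c_def)
  have "c + p * del c \<le> eblk mu s"
    unfolding eblk_def c_def[symmetric] useq_def by simp
  moreover have "i0 \<le> c + p * del c" using i0 by (auto simp: del_def)
  ultimately show ?thesis by simp
qed

abbreviation "gblk \<equiv> eblk (\<lambda>_. [])"

lemma gblk_lt: "s < L \<Longrightarrow> gblk s < i0 + L"
proof -
  assume s: "s < L"
  define c where "c = s div K"
  define i where "i = s mod K"
  have c: "c < p" using blk_lt[OF s] by (simp add: c_def)
  have g: "gblk s = c + p * (K - 1 - i + del c)"
    unfolding eblk_def c_def[symmetric] i_def[symmetric] useq_def by (simp add: pad_def)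
  show ?thesis
  proof (cases "c < i0")
    case True
    have "p * (K - 1 - i + del c) \<le> p * K" using True K by (intro mult_left_mono) (auto simp: del_def)
    then show ?thesis using g True by linarith
  next
    case False
    have "p * (K - 1 - i + del c) \<le> p * (K - 1)" using False by (intro mult_left_mono) (auto simp: del_def)
    also have "p * (K - 1) = p * K - p" by (simp add: right_diff_distrib')
    finally have a: "p * (K - 1 - i + del c) \<le> p * K - p" .
    have "p \<le> p * K" using K by simp
    then show ?thesis using g c a by linarith
  qed
qed

lemma part_empty: "[] \<in> PL K" by (simp add: PL_def is_partition_def)

lemma gblk_image: "gblk ` {0..<L} = {i0..<i0 + L}"
proof (rule card_subset_eq)
  show "finite {i0..<i0 + L}" by simp
  show "gblk ` {0..<L} \<subseteq> {i0..<i0 + L}" using eblk_ge gblk_lt by auto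
  have "inj_on gblk {0..<L}" by (rule eblk_inj) (simp add: is_partition_def)
  then show "card (gblk ` {0..<L}) = card {i0..<i0 + L}" by (simp add: card_image)
qed

lemma vac_image: "vac L' off ` {0..<L'} = {off..<off + L'}"
proof
  show "vac L' off ` {0..<L'} \<subseteq> {off..<off + L'}" by (auto simp: vac_def)
  show "{off..<off + L'} \<subseteq> vac L' off ` {0..<L'}"
  proof
    fix x assume x: "x \<in> {off..<off + L'}"
    then have "vac L' off (L' - 1 - (x - off)) = x" by (auto simp: vac_def)
    moreover have "L' - 1 - (x - off) \<in> {0..<L'}" using x by auto
    ultimately show "x \<in> vac L' off ` {0..<L'}" by (metis image_eqI)
  qed
qed

lemma vac_bij: "bij_betw (vac L' off) {0..<L'} {off..<off + L'}"
proof -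
  have "inj_on (vac L' off) {0..<L'}" by (rule inj_onI) (auto simp: vac_def)
  then show ?thesis using vac_image by (simp add: bij_betw_def)
qed

lemma useq_bij: "is_partition l \<Longrightarrow> bij_betw (useq L' off l) {0..<L'} (uset L' off l)"
proof -
  assume pl: "is_partition l"
  have "inj_on (useq L' off l) {0..<L'}" by (rule strict_dec_inj) (rule useq_strict[OF pl])
  then show ?thesis unfolding bij_betw_def uset_def by simp
qed

lemma eblk_set_props:
  assumes mu: "\<And>c. c < p \<Longrightarrow> mu c \<in> PL K"
  shows "part L i0 (eblk mu ` {0..<L}) \<in> PL L" and "uset L i0 (part L i0 (eblk mu ` {0..<L})) = eblk mu ` {0..<L}"
    and "bij_betw (eblk mu) {0..<L} (eblk mu ` {0..<L})"
proof -
  have inj: "inj_on (eblk mu) {0..<L}" by (rule eblk_inj) (use mu in \<open>auto simp: PL_def\<close>)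
  have fin: "finite (eblk mu ` {0..<L})" by simp
  have card: "card (eblk mu ` {0..<L}) = L" using inj by (simp add: card_image)
  have ge: "eblk mu ` {0..<L} \<subseteq> {i0..}" using eblk_ge by auto
  show "part L i0 (eblk mu ` {0..<L}) \<in> PL L" "uset L i0 (part L i0 (eblk mu ` {0..<L})) = eblk mu ` {0..<L}"
    using part_props[OF fin card ge] by simp_all
  show "bij_betw (eblk mu) {0..<L} (eblk mu ` {0..<L})" using inj by (simp add: bij_betw_def)
qed

lemma det_eblk:
  assumes mu: "\<And>c. c < p \<Longrightarrow> mu c \<in> PL K"
  shows "det (mat L L (\<lambda>(s, t). hZ (dilate p a) (int (eblk mu s) - int (gblk t)))) = (\<Prod>c<p. schur (mu c) a)"
proof -
  have "det (mat L L (\<lambda>(s, t). hZ (dilate p a) (int (eblk mu s) - int (gblk t))))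
      = (\<Prod>c<p. det (mat K K (\<lambda>(i, j). hZ (dilate p a) (int (eblk mu (c * K + i)) - int (gblk (c * K + j))))))"
  proof (rule det_blockdiag)
    fix s t assume s: "s < L" and t: "t < L" and ne: "s div K \<noteq> t div K"
    define c where "c = s div K"
    define c' where "c' = t div K"
    have c: "c < p" and c': "c' < p" using blk_lt[OF s] blk_lt[OF t] by (simp_all add: c_def c'_def)
    obtain X Y where e: "eblk mu s = c + p * X" and g: "gblk t = c' + p * Y"
      unfolding eblk_def c_def c'_def by blast
    have "\<not> int p dvd (int (eblk mu s) - int (gblk t))"
    proof
      assume "int p dvd (int (eblk mu s) - int (gblk t))"
      then have "int p dvd ((int c - int c') + int p * (int X - int Y))" unfolding e g by (simp add: algebra_simps)
      then have "int p dvd (int c - int c')" by (simp add: dvd_add_left_iff)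
      then have "c = c'" by (rule dvd_small_eq[OF c c'])
      then show False using ne by (simp add: c_def c'_def)
    qed
    then show "hZ (dilate p a) (int (eblk mu s) - int (gblk t)) = 0" using hZ_dilate[OF p] by simp
  qed
  also have "\<dots> = (\<Prod>c<p. schur (mu c) a)"
  proof (rule prod.cong[OF refl])
    fix c assume "c \<in> {..<p}"
    then have c: "c < p" by simp
    have "mat K K (\<lambda>(i, j). hZ (dilate p a) (int (eblk mu (c * K + i)) - int (gblk (c * K + j))))
        = mat K K (\<lambda>(i, j). hZ a (int (useq K (del c) (mu c) i) - int (vac K (del c) j)))"
    proof (rule eq_matI)
      fix i j assume i: "i < dim_row (mat K K (\<lambda>(i, j). hZ a (int (useq K (del c) (mu c) i) - int (vac K (del c) j))))"
        and j: "j < dim_col (mat K K (\<lambda>(i, j). hZ a (int (useq K (del c) (mu c) i) - int (vac K (del c) j))))"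
      then have i: "i < K" and j: "j < K" by simp_all
      have u: "useq K (del c) [] j = vac K (del c) j" by (simp add: useq_def vac_def pad_def)
      have "int (eblk mu (c * K + i)) - int (gblk (c * K + j)) = int p * (int (useq K (del c) (mu c) i) - int (vac K (del c) j))"
        unfolding eblk_blk[OF c i] eblk_blk[OF c j] u by (simp add: algebra_simps)
      then have "hZ (dilate p a) (int (eblk mu (c * K + i)) - int (gblk (c * K + j))) = hZ a (int (useq K (del c) (mu c) i) - int (vac K (del c) j))"
        using hZ_dilate[OF p] p by simp
      then show "mat K K (\<lambda>(i, j). hZ (dilate p a) (int (eblk mu (c * K + i)) - int (gblk (c * K + j)))) $$ (i, j)
          = mat K K (\<lambda>(i, j). hZ a (int (useq K (del c) (mu c) i) - int (vac K (del c) j))) $$ (i, j)"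
        using i j by simp
    qed auto
    also have "det \<dots> = schur (mu c) a"
      by (rule schur_useq[symmetric]) (use mu[OF c] in \<open>simp add: PL_def\<close>)
    finally show "det (mat K K (\<lambda>(i, j). hZ (dilate p a) (int (eblk mu (c * K + i)) - int (gblk (c * K + j))))) = schur (mu c) a" .
  qed
  finally show ?thesis .
qed

lemma schur_dilate_pair:
  assumes mu: "\<And>c. c < p \<Longrightarrow> mu c \<in> PL K"
  defines "lam \<equiv> part L i0 (eblk mu ` {0..<L})"
  shows "schur lam (dilate p a) * schur lam (dilate p b) = (\<Prod>c<p. schur (mu c) a) * (\<Prod>c<p. schur (mu c) b)"
proof -
  have ep1: "lam \<in> PL L" unfolding lam_def by (rule eblk_set_props(1)) (rule mu)
  have ep2: "uset L i0 lam = eblk mu ` {0..<L}" unfolding lam_def by (rule eblk_set_props(2)) (rule mu)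
  have pl: "is_partition lam" and len: "length lam \<le> L" using ep1 by (auto simp: PL_def)
  have e: "bij_betw (useq L i0 lam) {0..<L} (eblk mu ` {0..<L})" using useq_bij[OF pl, of L i0] ep2 by simp
  have e': "bij_betw (eblk mu) {0..<L} (eblk mu ` {0..<L})" by (rule eblk_set_props(3)) (rule mu)
  have g: "bij_betw (vac L i0) {0..<L} {i0..<i0 + L}" by (rule vac_bij)
  have g': "bij_betw gblk {0..<L} {i0..<i0 + L}"
  proof -
    have "inj_on gblk {0..<L}" by (rule eblk_inj) (simp add: is_partition_def)
    then show ?thesis using gblk_image by (simp add: bij_betw_def)
  qed
  have "schur lam (dilate p a) * schur lam (dilate p b)
      = det (mat L L (\<lambda>(i, j). hZ (dilate p a) (int (useq L i0 lam i) - int (vac L i0 j))))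
      * det (mat L L (\<lambda>(i, j). hZ (dilate p b) (int (useq L i0 lam i) - int (vac L i0 j))))"
    using schur_useq[OF len] by simp
  also have "\<dots> = det (mat L L (\<lambda>(i, j). hZ (dilate p a) (int (eblk mu i) - int (gblk j))))
      * det (mat L L (\<lambda>(i, j). hZ (dilate p b) (int (eblk mu i) - int (gblk j))))"
    by (rule det_pair_reindex[OF e e' g g', of "\<lambda>u v. hZ (dilate p a) (int u - int v)" "\<lambda>u v. hZ (dilate p b) (int u - int v)", symmetric])
  also have "\<dots> = (\<Prod>c<p. schur (mu c) a) * (\<Prod>c<p. schur (mu c) b)"
    using det_eblk[OF mu] by simp
  finally show ?thesis .
qed

lemma card_res_cls:
  assumes inj: "inj_on h {0..<M}" and True: "c < p"
  shows "card {i\<in>{0..<M}. h i mod p = c} = card (cls p (h ` {0..<M}) c)"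
  proof (rule bij_betw_same_card[of "\<lambda>i. h i div p"])
    show "bij_betw (\<lambda>i. h i div p) {i\<in>{0..<M}. h i mod p = c} (cls p (h ` {0..<M}) c)"
    proof (rule bij_betw_imageI)
      show "inj_on (\<lambda>i. h i div p) {i\<in>{0..<M}. h i mod p = c}"
      proof (rule inj_onI)
        fix x y assume x: "x \<in> {i\<in>{0..<M}. h i mod p = c}" and y: "y \<in> {i\<in>{0..<M}. h i mod p = c}"
          and eq: "h x div p = h y div p"
        have "h x = h y" using x y eq by (metis (mono_tags, lifting) div_mult_mod_eq mem_Collect_eq)
        then show "x = y" using inj_onD[OF inj] x y by auto
      qed
      show "(\<lambda>i. h i div p) ` {i\<in>{0..<M}. h i mod p = c} = cls p (h ` {0..<M}) c"
      proof
        show "(\<lambda>i. h i div p) ` {i\<in>{0..<M}. h i mod p = c} \<subseteq> cls p (h ` {0..<M}) c"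
        proof
          fix w assume "w \<in> (\<lambda>i. h i div p) ` {i\<in>{0..<M}. h i mod p = c}"
          then obtain i where i: "i \<in> {0..<M}" "h i mod p = c" "w = h i div p" by auto
          then have "c + p * w = h i" by (metis add.commute mod_mult_div_eq)
          then show "w \<in> cls p (h ` {0..<M}) c" using i(1) by (auto simp: cls_def)
        qed
        show "cls p (h ` {0..<M}) c \<subseteq> (\<lambda>i. h i div p) ` {i\<in>{0..<M}. h i mod p = c}"
        proof
          fix w assume "w \<in> cls p (h ` {0..<M}) c"
          then obtain i where i: "i \<in> {0..<M}" "h i = c + p * w" by (auto simp: cls_def)
          then have "h i mod p = c" "h i div p = w" using True by simp_all
          then show "w \<in> (\<lambda>i. h i div p) ` {i\<in>{0..<M}. h i mod p = c}" using i by force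
        qed
      qed
    qed
  qed

lemma schur_dilate_zero:
  assumes l: "l \<in> PL L" and c0: "c0 < p" and ne: "card (cls p (uset L i0 l) c0) \<noteq> K"
  shows "schur l (dilate p a) = 0"
proof -
  have pl: "is_partition l" and len: "length l \<le> L" using l by (auto simp: PL_def)
  let ?u = "useq L i0 l" and ?v = "vac L i0"
  have injU: "inj_on ?u {0..<L}" by (rule strict_dec_inj) (rule useq_strict[OF pl])
  have injV: "inj_on ?v {0..<L}" using vac_bij by (auto simp: bij_betw_def)
  define R where "R c = {i\<in>{0..<L}. ?u i mod p = c}" for c
  define C where "C c = {i\<in>{0..<L}. ?v i mod p = c}" for c
  have cardR: "card (R c) = card (cls p (uset L i0 l) c)" if "c < p" for c
    unfolding R_def uset_def by (rule card_res_cls[OF injU that])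
  have cardC: "card (C c) = K" if "c < p" for c
  proof -
    have "card (C c) = card (cls p (?v ` {0..<L}) c)" unfolding C_def by (rule card_res_cls[OF injV that])
    also have "?v ` {0..<L} = gblk ` {0..<L}" using vac_image gblk_image by simp
    also have "cls p (gblk ` {0..<L}) c = uset K (del c) []" by (rule cls_eblk[OF that])
    also have "card (uset K (del c) []) = K"
      using bij_betw_same_card[OF useq_bij[of "[]" K "del c"]] by (simp add: is_partition_def)
    finally show ?thesis .
  qed
  have sumR: "(\<Sum>c<p. card (R c)) = p * K"
  proof -
    have "card (uset L i0 l) = L" using injU by (simp add: uset_def card_image)
    then show ?thesis using card_cls_sum[OF p, of "uset L i0 l"] by (simp add: cardR uset_def)
  qed
  have "schur l (dilate p a) = det (mat L L (\<lambda>(i, j). hZ (dilate p a) (int (?u i) - int (?v j))))"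
    by (rule schur_useq[OF len])
  also have "\<dots> = 0"
  proof (rule det_zero_crit)
    fix s assume s: "s permutes {0..<L}"
    show "\<exists>i<L. hZ (dilate p a) (int (?u i) - int (?v (s i))) = 0"
    proof (rule ccontr)
      assume "\<not> ?thesis"
      then have nz: "\<And>i. i < L \<Longrightarrow> hZ (dilate p a) (int (?u i) - int (?v (s i))) \<noteq> 0" by auto
      have res: "?u i mod p = ?v (s i) mod p" if "i < L" for i
      proof -
        have hd: "hZ (dilate p a) (int (?u i) - int (?v (s i))) = (if int p dvd (int (?u i) - int (?v (s i))) then hZ a ((int (?u i) - int (?v (s i))) div int p) else 0)"
          by (rule hZ_dilate[OF p])
        have "int p dvd (int (?u i) - int (?v (s i)))"
        proof (rule ccontr)
          assume "\<not> int p dvd (int (?u i) - int (?v (s i)))"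
          then show False using nz[OF that] hd by simp
        qed
        then have "int (?u i) mod int p = int (?v (s i)) mod int p" by (simp add: mod_eq_dvd_iff)
        then have "int (?u i mod p) = int (?v (s i) mod p)" by (simp add: of_nat_mod)
        then show ?thesis by simp
      qed
      have le: "card (R c) \<le> K" if c: "c < p" for c
      proof -
        have "card (R c) \<le> card (C c)"
        proof (rule card_inj_on_le[of s])
          show "inj_on s (R c)" using permutes_inj_on[OF s] .
          show "s ` R c \<subseteq> C c"
          proof
            fix y assume "y \<in> s ` R c"
            then obtain i where i: "i \<in> R c" "y = s i" by auto
            then have il: "i < L" and ic: "?u i mod p = c" by (simp_all add: R_def)
            then have "s i < L" using permutes_in_image[OF s, of i] by simp
            moreover have "?v (s i) mod p = c" using res[OF il] ic by simp
            ultimately show "y \<in> C c" using i by (simp add: C_def)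
          qed
          show "finite (C c)" by (simp add: C_def)
        qed
        then show ?thesis using cardC[OF c] by simp
      qed
      have "card (R c0) < K" using ne le[OF c0] cardR[OF c0] by simp
      then have "(\<Sum>c<p. card (R c)) < (\<Sum>c<p. K)"
        by (intro sum_strict_mono_ex1) (use le c0 in auto)
      then show False using sumR by simp
    qed
  qed
  finally show ?thesis .
qed

definition EC :: "nat list set" where
  "EC = {l \<in> PL L. \<forall>c<p. card (cls p (uset L i0 l) c) = K}"

definition Psi :: "(nat \<Rightarrow> nat list) \<Rightarrow> nat list" where
  "Psi mu = part L i0 (eblk mu ` {0..<L})"

lemma card_uset: "is_partition l \<Longrightarrow> card (uset L' off l) = L'"
  using bij_betw_same_card[OF useq_bij[of l L' off]] by simp

lemma finite_cls: "finite U \<Longrightarrow> finite (cls p U c)"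
proof -
  assume fin: "finite U"
  have "cls p U c \<subseteq> (\<lambda>x. (x - c) div p) ` U"
  proof
    fix w assume "w \<in> cls p U c"
    then have "c + p * w \<in> U" "(c + p * w - c) div p = w" using p by (auto simp: cls_def)
    then show "w \<in> (\<lambda>x. (x - c) div p) ` U" by (metis image_eqI)
  qed
  then show ?thesis using fin finite_surj by blast
qed

lemma Psi_bij: "bij_betw Psi (PiE {..<p} (\<lambda>_. PL K)) EC"
proof (rule bij_betwI')
  fix mu mu' assume mu: "mu \<in> PiE {..<p} (\<lambda>_. PL K)" and mu': "mu' \<in> PiE {..<p} (\<lambda>_. PL K)"
  have m1: "\<And>c. c < p \<Longrightarrow> mu c \<in> PL K" and m2: "\<And>c. c < p \<Longrightarrow> mu' c \<in> PL K" using mu mu' by auto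
  show "(Psi mu = Psi mu') = (mu = mu')"
  proof
    assume eq: "Psi mu = Psi mu'"
    have A: "uset L i0 (Psi mu) = eblk mu ` {0..<L}" unfolding Psi_def by (rule eblk_set_props(2)[OF m1])
    have B: "uset L i0 (Psi mu') = eblk mu' ` {0..<L}" unfolding Psi_def by (rule eblk_set_props(2)[OF m2])
    have "eblk mu ` {0..<L} = eblk mu' ` {0..<L}" using A B eq by simp
    then have US: "uset K (del c) (mu c) = uset K (del c) (mu' c)" if "c < p" for c
      using cls_eblk[OF that, of mu] cls_eblk[OF that, of mu'] by simp
    have "mu c = mu' c" if "c < p" for c
    proof -
      have "mu c = part K (del c) (uset K (del c) (mu c))" by (simp add: part_uset[OF m1[OF that]])
      also have "\<dots> = part K (del c) (uset K (del c) (mu' c))" using US that by simp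
      also have "\<dots> = mu' c" by (simp add: part_uset[OF m2[OF that]])
      finally show ?thesis .
    qed
    then show "mu = mu'" using mu mu' by (intro PiE_ext[OF mu mu']) auto
  qed simp
next
  fix mu assume mu: "mu \<in> PiE {..<p} (\<lambda>_. PL K)"
  have m1: "\<And>c. c < p \<Longrightarrow> mu c \<in> PL K" using mu by auto
  have "Psi mu \<in> PL L" unfolding Psi_def by (rule eblk_set_props(1)[OF m1])
  moreover have "card (cls p (uset L i0 (Psi mu)) c) = K" if "c < p" for c
  proof -
    have "uset L i0 (Psi mu) = eblk mu ` {0..<L}" unfolding Psi_def by (rule eblk_set_props(2)[OF m1])
    then have "cls p (uset L i0 (Psi mu)) c = uset K (del c) (mu c)" using cls_eblk[OF that] by simp
    then show ?thesis using card_uset m1[OF that] by (simp add: PL_def)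
  qed
  ultimately show "Psi mu \<in> EC" unfolding EC_def by simp
next
  fix l assume l: "l \<in> EC"
  have lp: "l \<in> PL L" and cc: "\<And>c. c < p \<Longrightarrow> card (cls p (uset L i0 l) c) = K" using l by (auto simp: EC_def)
  have pl: "is_partition l" using lp by (simp add: PL_def)
  define U where "U = uset L i0 l"
  have finU: "finite U" by (simp add: U_def uset_def)
  have geU: "U \<subseteq> {i0..}"
  proof
    fix x assume "x \<in> U"
    then obtain i where "i < L" "x = useq L i0 l i" by (auto simp: U_def uset_def)
    then show "x \<in> {i0..}" by (simp add: useq_def)
  qed
  define mu where "mu = restrict (\<lambda>c. part K (del c) (cls p U c)) {..<p}"
  have mc: "mu c \<in> PL K \<and> uset K (del c) (mu c) = cls p U c" if c: "c < p" for c
  proof -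
    have ge: "cls p U c \<subseteq> {del c..}"
    proof
      fix w assume "w \<in> cls p U c"
      then have "c + p * w \<in> U" by (simp add: cls_def)
      then have "i0 \<le> c + p * w" using geU by auto
      then have "c < i0 \<Longrightarrow> w \<noteq> 0" by (metis add.right_neutral mult_0_right not_le)
      then show "w \<in> {del c..}" by (cases "c < i0") (auto simp: del_def)
    qed
    have "mu c = part K (del c) (cls p U c)" using c by (simp add: mu_def)
    then show ?thesis using part_props[OF finite_cls[OF finU] cc[OF c, folded U_def] ge] by simp
  qed
  have mu: "mu \<in> PiE {..<p} (\<lambda>_. PL K)" using mc by (auto simp: mu_def)
  have "eblk mu ` {0..<L} = U"
  proof (rule set_eq_cls[OF p])
    fix c assume c: "c < p"
    show "cls p (eblk mu ` {0..<L}) c = cls p U c" using cls_eblk[OF c] mc[OF c] by simp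
  qed
  then have "Psi mu = l" unfolding Psi_def U_def using part_uset[OF lp] by simp
  then show "\<exists>mu\<in>PiE {..<p} (\<lambda>_. PL K). l = Psi mu" using mu by auto
qed

end




definition w1 :: "var \<Rightarrow> nat" where "w1 v = (case v of Inl k \<Rightarrow> k | Inr k \<Rightarrow> k)"

definition PB :: "nat \<Rightarrow> nat list set" where
  "PB D = {l. is_partition l \<and> sum_list l \<le> D}"

lemma length_le_sum: "is_partition l \<Longrightarrow> length l \<le> sum_list l"
proof -
  assume "is_partition l"
  then have "\<forall>x\<in>set l. 1 \<le> x" unfolding is_partition_def by (metis less_one not_less)
  then have "sum_list (map (\<lambda>_. 1::nat) l) \<le> sum_list (map (\<lambda>x. x) l)" by (intro sum_list_mono) auto
  then show ?thesis by (simp add: sum_list_triv)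
qed

lemma finite_PB: "finite (PB D)"
proof -
  have "PB D \<subseteq> {xs. set xs \<subseteq> {0..D} \<and> length xs \<le> D}"
  proof
    fix l assume "l \<in> PB D"
    then have pl: "is_partition l" and s: "sum_list l \<le> D" by (auto simp: PB_def)
    have "x \<le> D" if "x \<in> set l" for x using member_le_sum_list[OF that] s by simp
    then show "l \<in> {xs. set xs \<subseteq> {0..D} \<and> length xs \<le> D}" using length_le_sum[OF pl] s by auto
  qed
  moreover have "finite {xs. set xs \<subseteq> {0..D} \<and> length xs \<le> D}" by (rule finite_lists_length_le) simp
  ultimately show ?thesis by (rule finite_subset)
qed

lemma pconst_mult: "pconst a * pconst b = pconst (a * b)"
  unfolding pconst_def by (simp add: mult_single)

lemma prod_pconst: "(\<Prod>c\<in>A. pconst (f c)) = pconst (\<Prod>c\<in>A. f c)"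
  by (induction A rule: infinite_finite_induct) (simp_all add: pconst_mult)

lemma wdeg_scale: "wdeg (\<lambda>v. p * w v) x = p * wdeg w x"
  unfolding wdeg_def by (simp add: sum_distrib_left mult.assoc)

lemma subm_wdeg: "subm x m \<Longrightarrow> wdeg w x \<le> wdeg w m"
  unfolding subm_def using wdeg_add by (metis le_add1)

lemma homog_pvar: "homog w (pvar v) (int (w v))"
  unfolding homog_def pvar_def wdeg_def by simp

lemma graded_tseq: "graded w1 tseq" and graded_tsseq: "graded w1 tsseq"
proof -
  have "homog w1 (pvar (Inl j)) (int j)" for j using homog_pvar[of w1 "Inl j"] by (simp add: w1_def)
  then show "graded w1 tseq" unfolding graded_def tseq_def by simp
  have "homog w1 (pvar (Inr j)) (int j)" for j using homog_pvar[of w1 "Inr j"] by (simp add: w1_def)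
  then show "graded w1 tsseq" unfolding graded_def tsseq_def by simp
qed

lemma graded_dilate:
  assumes p: "p \<ge> 1" and g: "graded w1 a"
  shows "graded (\<lambda>v. p * w1 v) (dilate p a)"
  unfolding graded_def
proof
  fix j
  show "homog (\<lambda>v. p * w1 v) (dilate p a j) (int j)"
  proof (cases "0 < j \<and> p dvd j")
    case True
    then obtain q where j: "j = p * q" by (auto elim: dvdE)
    have "homog w1 (a q) (int q)" using g by (simp add: graded_def)
    then have "homog (\<lambda>v. p * w1 v) (a q) (int (p * q))"
      unfolding homog_def by (simp add: wdeg_scale)
    then show ?thesis using True p j by (simp add: dilate_def)
  next
    case False
    then have "dilate p a j = 0" by (auto simp: dilate_def)
    then show ?thesis by simp
  qed
qed

lemma lookup_ss_nz:
  assumes ga: "graded w a" and gb: "graded w b"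
    and nz: "Poly_Mapping.lookup (schur l a * schur l b) x \<noteq> 0"
  shows "2 * sum_list l = wdeg w x"
proof -
  have "homog w (schur l a * schur l b) (int (sum_list l) + int (sum_list l))"
    by (rule homog_mult[OF homog_schur[OF ga] homog_schur[OF gb]])
  from homog_lookup[OF this nz] show ?thesis by simp
qed

lemma tau_lookup:
  assumes ga: "graded w a" and gb: "graded w b" and x: "wdeg w x \<le> 2 * D"
  shows "tau \<rho> N a b x = Poly_Mapping.lookup (\<Sum>l\<in>PB D. pconst (rho_part \<rho> l N) * (schur l a * schur l b)) x"
proof -
  have "tau \<rho> N a b x = infsum (\<lambda>l. rho_part \<rho> l N * Poly_Mapping.lookup (schur l a * schur l b) x) {l. is_partition l}"
    by (simp add: tau_def)
  also have "\<dots> = infsum (\<lambda>l. rho_part \<rho> l N * Poly_Mapping.lookup (schur l a * schur l b) x) (PB D)"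
  proof (rule infsum_cong_neutral)
    fix l assume l: "l \<in> {l. is_partition l} - PB D"
    show "rho_part \<rho> l N * Poly_Mapping.lookup (schur l a * schur l b) x = 0"
    proof (rule ccontr)
      assume "rho_part \<rho> l N * Poly_Mapping.lookup (schur l a * schur l b) x \<noteq> 0"
      then have "Poly_Mapping.lookup (schur l a * schur l b) x \<noteq> 0" by auto
      then have "2 * sum_list l = wdeg w x" by (rule lookup_ss_nz[OF ga gb])
      then show False using l x by (auto simp: PB_def)
    qed
  qed (auto simp: PB_def)
  also have "\<dots> = (\<Sum>l\<in>PB D. rho_part \<rho> l N * Poly_Mapping.lookup (schur l a * schur l b) x)"
    by (simp add: finite_PB)
  also have "\<dots> = Poly_Mapping.lookup (\<Sum>l\<in>PB D. pconst (rho_part \<rho> l N) * (schur l a * schur l b)) x"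
    by (simp add: lookup_sum lookup_pconst_mult)
  finally show ?thesis .
qed

context setting begin

abbreviation XB :: "(int \<Rightarrow> complex) \<Rightarrow> int \<Rightarrow> nat \<Rightarrow> complex" where
  "XB r n \<equiv> (\<lambda>y. r (int y + ((n - int K) * int p + 1)))"

lemma QI_group:
  assumes c: "c < p" and ab: "\<alpha> \<le> \<beta>"
  shows "QI (\<lambda>k. rsup r p (c + 1) (int k + (n - int K + 1))) \<alpha> \<beta> = QI (XB r n) (c + p * \<alpha>) (c + p * \<beta>)"
  using ab
proof (induction \<beta> rule: dec_induct)
  case base
  then show ?case by (simp add: QI_def)
next
  case (step b)
  have blk: "rsup r p (c + 1) (int b + (n - int K + 1)) = QI (XB r n) (c + p * b) (c + p * b + p)"
  proof -
    have "rsup r p (c + 1) (int b + (n - int K + 1)) = (\<Prod>j<p. r ((int b + (n - int K + 1)) * int p + int (c + 1) - 1 - int j))"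
      by (simp add: rsup_def Rfun_def)
    also have "\<dots> = (\<Prod>j<p. XB r n (c + p * b + (p - Suc j)))"
      by (rule prod.cong[OF refl]) (auto simp: of_nat_diff algebra_simps)
    also have "\<dots> = (\<Prod>s<p. XB r n (c + p * b + s))"
      by (rule prod.nat_diff_reindex)
    also have "\<dots> = (\<Prod>s\<in>{0..<p}. XB r n (s + (c + p * b)))"
      by (simp add: atLeast0LessThan add.commute)
    also have "\<dots> = (\<Prod>y\<in>{0 + (c + p * b)..<p + (c + p * b)}. XB r n y)"
      by (rule prod.shift_bounds_nat_ivl[symmetric])
    also have "\<dots> = QI (XB r n) (c + p * b) (c + p * b + p)"
      by (simp add: QI_def add.commute)
    finally show ?thesis .
  qed
  have "QI (\<lambda>k. rsup r p (c + 1) (int k + (n - int K + 1))) \<alpha> (Suc b)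
      = QI (\<lambda>k. rsup r p (c + 1) (int k + (n - int K + 1))) \<alpha> b * rsup r p (c + 1) (int b + (n - int K + 1))"
    unfolding QI_def using step.hyps(1) by (simp add: prod.atLeastLessThan_Suc)
  also have "\<dots> = QI (XB r n) (c + p * \<alpha>) (c + p * b) * QI (XB r n) (c + p * b) (c + p * b + p)"
    using step.IH blk by simp
  also have "\<dots> = QI (XB r n) (c + p * \<alpha>) (c + p * Suc b)"
    unfolding QI_def using step.hyps(1) by (subst prod.atLeastLessThan_concat) (auto simp: algebra_simps)
  finally show ?case .
qed

lemma rho_quot:
  assumes c: "c < p" and mu: "mu c \<in> PL K"
  shows "rho_part (rsup r p (c + 1)) (mu c) (n + int (del c)) = (\<Prod>t<K. QI (XB r n) (gblk (c * K + t)) (eblk mu (c * K + t)))"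
proof -
  have len: "length (mu c) \<le> K" using mu by (simp add: PL_def)
  have "rho_part (rsup r p (c + 1)) (mu c) (n + int (del c))
      = (\<Prod>t<K. QI (\<lambda>y. rsup r p (c + 1) (int y + (n + int (del c) - int K + 1 - int (del c)))) (vac K (del c) t) (useq K (del c) (mu c) t))"
    by (rule rho_part_QI[OF len])
  also have "\<dots> = (\<Prod>t<K. QI (\<lambda>k. rsup r p (c + 1) (int k + (n - int K + 1))) (vac K (del c) t) (useq K (del c) (mu c) t))"
    by (simp add: algebra_simps)
  also have "\<dots> = (\<Prod>t<K. QI (XB r n) (gblk (c * K + t)) (eblk mu (c * K + t)))"
  proof (rule prod.cong[OF refl])
    fix t assume "t \<in> {..<K}"
    then have t: "t < K" by simp
    have u: "useq K (del c) [] t = vac K (del c) t" by (simp add: useq_def vac_def pad_def)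
    show "QI (\<lambda>k. rsup r p (c + 1) (int k + (n - int K + 1))) (vac K (del c) t) (useq K (del c) (mu c) t)
        = QI (XB r n) (gblk (c * K + t)) (eblk mu (c * K + t))"
      unfolding eblk_blk[OF c t] u by (rule QI_group[OF c vac_le_useq])
  qed
  finally show ?thesis .
qed

lemma prod_blocks: "(\<Prod>c<p. \<Prod>t<K. h (c * K + t)) = (\<Prod>s<L. (h s :: 'a::comm_monoid_mult))"
proof -
  have "(\<Prod>c<p. \<Prod>t<K. h (c * K + t)) = (\<Prod>c<p. prod h {c * K..<c * K + K})"
  proof (rule prod.cong[OF refl])
    fix c
    have "prod h {0 + c * K..<K + c * K} = (\<Prod>t\<in>{0..<K}. h (t + c * K))" by (rule prod.shift_bounds_nat_ivl)
    then show "(\<Prod>t<K. h (c * K + t)) = prod h {c * K..<c * K + K}" by (simp add: atLeast0LessThan add.commute)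
  qed
  also have "\<dots> = prod h {..<p * K}" by (rule prod.nat_group)
  finally show ?thesis .
qed

lemma rho_Psi:
  assumes mu: "\<And>c. c < p \<Longrightarrow> mu c \<in> PL K"
  fixes n :: int
  shows "rho_part r (Psi mu) (n * int p + int i0) = (\<Prod>c<p. rho_part (rsup r p (c + 1)) (mu c) (n + int (del c)))"
proof -
  have ep1: "Psi mu \<in> PL L" unfolding Psi_def by (rule eblk_set_props(1)) (rule mu)
  have ep2: "uset L i0 (Psi mu) = eblk mu ` {0..<L}" unfolding Psi_def by (rule eblk_set_props(2)) (rule mu)
  have pl: "is_partition (Psi mu)" and len: "length (Psi mu) \<le> L" using ep1 by (auto simp: PL_def)
  have e: "bij_betw (useq L i0 (Psi mu)) {0..<L} (eblk mu ` {0..<L})" using useq_bij[OF pl, of L i0] ep2 by simp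
  have e': "bij_betw (eblk mu) {0..<L} (eblk mu ` {0..<L})" by (rule eblk_set_props(3)) (rule mu)
  have g: "bij_betw (vac L i0) {0..<L} {i0..<i0 + L}" by (rule vac_bij)
  have g': "bij_betw gblk {0..<L} {i0..<i0 + L}"
  proof -
    have "inj_on gblk {0..<L}" by (rule eblk_inj) (simp add: is_partition_def)
    then show ?thesis using gblk_image by (simp add: bij_betw_def)
  qed
  have ge': "gblk s \<le> eblk mu s" if "s < L" for s
  proof -
    have "useq K (del (s div K)) [] (s mod K) \<le> useq K (del (s div K)) (mu (s div K)) (s mod K)"
      by (simp add: useq_def pad_def)
    then show ?thesis unfolding eblk_def by simp
  qed
  have "rho_part r (Psi mu) (n * int p + int i0)
      = (\<Prod>i<L. QI (\<lambda>y. r (int y + (n * int p + int i0 - int L + 1 - int i0))) (vac L i0 i) (useq L i0 (Psi mu) i))"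
    by (rule rho_part_QI[OF len])
  also have "(\<lambda>y. r (int y + (n * int p + int i0 - int L + 1 - int i0))) = XB r n"
    by (simp add: algebra_simps)
  also have "(\<Prod>i<L. QI (XB r n) (vac L i0 i) (useq L i0 (Psi mu) i)) = (\<Prod>s<L. QI (XB r n) (gblk s) (eblk mu s))"
    by (rule QI_inv[OF e g e' g']) (simp_all add: vac_le_useq ge')
  also have "\<dots> = (\<Prod>c<p. \<Prod>t<K. QI (XB r n) (gblk (c * K + t)) (eblk mu (c * K + t)))"
    by (rule prod_blocks[symmetric])
  also have "\<dots> = (\<Prod>c<p. rho_part (rsup r p (c + 1)) (mu c) (n + int (del c)))"
  proof (rule prod.cong[OF refl])
    fix c assume "c \<in> {..<p}"
    then have c: "c < p" by simp
    show "(\<Prod>t<K. QI (XB r n) (gblk (c * K + t)) (eblk mu (c * K + t))) = rho_part (rsup r p (c + 1)) (mu c) (n + int (del c))"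
      using rho_quot[of c mu r n] c mu[OF c] by simp
  qed
  finally show ?thesis .
qed

definition Tc :: "(int \<Rightarrow> complex) \<Rightarrow> int \<Rightarrow> nat \<Rightarrow> nat \<Rightarrow> mpoly" where
  "Tc r n D c = (\<Sum>l\<in>PB D. pconst (rho_part (rsup r p (c + 1)) l (n + int (del c))) * (schur l tseq * schur l tsseq))"

lemma main_coeff:
  fixes n :: int and m :: monom
  assumes D: "wdeg w1 m \<le> D" "D < K"
  shows "tau r (n * int p + int i0) (dilate p tseq) (dilate p tsseq) m = Poly_Mapping.lookup (\<Prod>c<p. Tc r n D c) m"
proof -
  let ?a = "dilate p tseq" and ?b = "dilate p tsseq" and ?N = "n * int p + int i0"
  let ?wp = "\<lambda>v. p * w1 v"
  have ga: "graded ?wp ?a" and gb: "graded ?wp ?b" using graded_dilate[OF p] graded_tseq graded_tsseq by auto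
  define f where "f l = rho_part r l ?N * Poly_Mapping.lookup (schur l ?a * schur l ?b) m" for l
  define rc where "rc mu = (\<Prod>c<p. rho_part (rsup r p (c + 1)) (mu c) (n + int (del c)))" for mu
  define G where "G mu = rc mu * Poly_Mapping.lookup (\<Prod>c<p. schur (mu c) tseq * schur (mu c) tsseq) m" for mu
  have pD: "p * D < L" using D(2) p by simp
  have "tau r ?N ?a ?b m = infsum f {l. is_partition l}" by (simp add: tau_def f_def[abs_def])
  also have "\<dots> = infsum f EC"
  proof (rule infsum_cong_neutral)
    fix l assume l: "l \<in> {l. is_partition l} - EC"
    show "f l = 0"
    proof (rule ccontr)
      assume "f l \<noteq> 0"
      then have nz: "Poly_Mapping.lookup (schur l ?a * schur l ?b) m \<noteq> 0" by (auto simp: f_def)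
      have "2 * sum_list l = wdeg ?wp m" by (rule lookup_ss_nz[OF ga gb nz])
      also have "\<dots> = p * wdeg w1 m" by (rule wdeg_scale)
      also have "\<dots> \<le> p * D" using D(1) by simp
      finally have s2: "2 * sum_list l \<le> p * D" .
      have "length l \<le> sum_list l" using length_le_sum[of l] l by auto
      then have "length l < L" using s2 pD by linarith
      then have lp: "l \<in> PL L" using l by (simp add: PL_def)
      then obtain c0 where c0: "c0 < p" "card (cls p (uset L i0 l) c0) \<noteq> K" using l by (auto simp: EC_def)
      have "schur l ?a = 0" by (rule schur_dilate_zero[OF lp c0])
      then show False using nz by simp
    qed
  qed (auto simp: EC_def PL_def)
  also have "\<dots> = infsum (\<lambda>mu. f (Psi mu)) (PiE {..<p} (\<lambda>_. PL K))"
    by (rule infsum_reindex_bij_betw[OF Psi_bij, symmetric])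
  also have "\<dots> = infsum G (PiE {..<p} (\<lambda>_. PL K))"
  proof (rule infsum_cong)
    fix mu assume mu: "mu \<in> PiE {..<p} (\<lambda>_. PL K)"
    then have m1: "\<And>c. c < p \<Longrightarrow> mu c \<in> PL K" by auto
    have "schur (Psi mu) ?a * schur (Psi mu) ?b = (\<Prod>c<p. schur (mu c) tseq) * (\<Prod>c<p. schur (mu c) tsseq)"
      unfolding Psi_def by (rule schur_dilate_pair[OF m1])
    also have "\<dots> = (\<Prod>c<p. schur (mu c) tseq * schur (mu c) tsseq)" by (simp add: prod.distrib)
    finally show "f (Psi mu) = G mu"
      unfolding f_def G_def rc_def using rho_Psi[OF m1, where r=r and n=n] by simp
  qed
  also have "\<dots> = infsum G (PiE {..<p} (\<lambda>_. PB D))"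
  proof (rule infsum_cong_neutral)
    fix mu assume mu: "mu \<in> PiE {..<p} (\<lambda>_. PL K) - PiE {..<p} (\<lambda>_. PB D)"
    show "G mu = 0"
    proof (rule ccontr)
      assume "G mu \<noteq> 0"
      then have nz: "Poly_Mapping.lookup (\<Prod>c<p. schur (mu c) tseq * schur (mu c) tsseq) m \<noteq> 0" by (auto simp: G_def)
      have "homog w1 (\<Prod>c<p. schur (mu c) tseq * schur (mu c) tsseq) (\<Sum>c<p. int (sum_list (mu c)) + int (sum_list (mu c)))"
      proof (rule homog_prod)
        fix c
        show "homog w1 (schur (mu c) tseq * schur (mu c) tsseq) (int (sum_list (mu c)) + int (sum_list (mu c)))"
          by (rule homog_mult[OF homog_schur[OF graded_tseq] homog_schur[OF graded_tsseq]])
      qed simp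
      from homog_lookup[OF this nz] have A: "int (wdeg w1 m) = (\<Sum>c<p. int (sum_list (mu c)) + int (sum_list (mu c)))" .
      have "int (\<Sum>c<p. 2 * sum_list (mu c)) = (\<Sum>c<p. int (2 * sum_list (mu c)))" by (rule of_nat_sum)
      also have "\<dots> = (\<Sum>c<p. int (sum_list (mu c)) + int (sum_list (mu c)))"
        by (rule sum.cong[OF refl]) simp
      finally have B: "int (\<Sum>c<p. 2 * sum_list (mu c)) = (\<Sum>c<p. int (sum_list (mu c)) + int (sum_list (mu c)))" .
      have "int (wdeg w1 m) = int (\<Sum>c<p. 2 * sum_list (mu c))" unfolding A B ..
      then have "wdeg w1 m = (\<Sum>c<p. 2 * sum_list (mu c))" by (simp only: of_nat_eq_iff)
      then have le: "sum_list (mu c) \<le> D" if "c < p" for c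
      proof -
        assume eq: "wdeg w1 m = (\<Sum>c<p. 2 * sum_list (mu c))"
        have "2 * sum_list (mu c) \<le> (\<Sum>c<p. 2 * sum_list (mu c))"
          by (rule member_le_sum) (use that in auto)
        then show ?thesis using eq D(1) by simp
      qed
      have "mu \<in> PiE {..<p} (\<lambda>_. PB D)"
      proof -
        have "mu c \<in> PB D" if "c < p" for c
        proof -
          have "mu \<in> PiE {..<p} (\<lambda>_. PL K)" using mu by blast
          then have "mu c \<in> PL K" using that by (simp add: PiE_iff)
          then show ?thesis using le[OF that] by (simp add: PB_def PL_def)
        qed
        moreover have "mu \<in> extensional {..<p}" using mu by (simp add: PiE_iff)
        ultimately show ?thesis by (simp add: PiE_iff)
      qed
      then show False using mu by blast
    qed
  next
    fix mu assume mu: "mu \<in> PiE {..<p} (\<lambda>_. PB D) - PiE {..<p} (\<lambda>_. PL K)"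
    have "PB D \<subseteq> PL K"
    proof
      fix l assume "l \<in> PB D"
      then show "l \<in> PL K" using length_le_sum[of l] D(2) by (auto simp: PB_def PL_def)
    qed
    then have "PiE {..<p} (\<lambda>_. PB D) \<subseteq> PiE {..<p} (\<lambda>_. PL K)" by (rule PiE_mono)
    then show "G mu = 0" using mu by blast
  qed simp
  also have "\<dots> = (\<Sum>mu\<in>PiE {..<p} (\<lambda>_. PB D). G mu)"
    by (simp add: finite_PiE finite_PB)
  also have "\<dots> = Poly_Mapping.lookup (\<Prod>c<p. Tc r n D c) m"
  proof -
    have "(\<Prod>c<p. Tc r n D c) = (\<Sum>mu\<in>PiE {..<p} (\<lambda>_. PB D). \<Prod>c<p. pconst (rho_part (rsup r p (c + 1)) (mu c) (n + int (del c))) * (schur (mu c) tseq * schur (mu c) tsseq))"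
      unfolding Tc_def by (rule prod_sum_PiE) (simp_all add: finite_PB)
    also have "\<dots> = (\<Sum>mu\<in>PiE {..<p} (\<lambda>_. PB D). pconst (rc mu) * (\<Prod>c<p. schur (mu c) tseq * schur (mu c) tsseq))"
    proof (rule sum.cong[OF refl])
      fix mu
      have "(\<Prod>c<p. pconst (rho_part (rsup r p (c + 1)) (mu c) (n + int (del c))) * (schur (mu c) tseq * schur (mu c) tsseq))
          = (\<Prod>c<p. pconst (rho_part (rsup r p (c + 1)) (mu c) (n + int (del c)))) * (\<Prod>c<p. schur (mu c) tseq * schur (mu c) tsseq)"
        by (rule prod.distrib)
      also have "(\<Prod>c<p. pconst (rho_part (rsup r p (c + 1)) (mu c) (n + int (del c)))) = pconst (rc mu)"
        unfolding rc_def by (rule prod_pconst)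
      finally show "(\<Prod>c<p. pconst (rho_part (rsup r p (c + 1)) (mu c) (n + int (del c))) * (schur (mu c) tseq * schur (mu c) tsseq))
          = pconst (rc mu) * (\<Prod>c<p. schur (mu c) tseq * schur (mu c) tsseq)" .
    qed
    finally have "(\<Prod>c<p. Tc r n D c) = (\<Sum>mu\<in>PiE {..<p} (\<lambda>_. PB D). pconst (rc mu) * (\<Prod>c<p. schur (mu c) tseq * schur (mu c) tsseq))" .
    then have "Poly_Mapping.lookup (\<Prod>c<p. Tc r n D c) m = (\<Sum>mu\<in>PiE {..<p} (\<lambda>_. PB D). rc mu * Poly_Mapping.lookup (\<Prod>c<p. schur (mu c) tseq * schur (mu c) tsseq) m)"
      by (simp only: lookup_sum lookup_pconst_mult)
    then show ?thesis by (simp only: G_def)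
  qed
  finally show ?thesis .
qed

end

theorem mainTheorem3:
  fixes r :: "int \<Rightarrow> complex" and p :: nat and n :: int and i :: nat
  assumes "1 \<le> p" and "1 \<le> i" and "i \<le> p"
  shows "tau r (n * int p + int i) (dilate p tseq) (dilate p tsseq)
       = ser_mult (ser_prod (\<lambda>m. tau (rsup r p m) (n + 1) tseq tsseq) [1..<i+1])
                  (ser_prod (\<lambda>m. tau (rsup r p m) n tseq tsseq) [i+1..<p+1])"
proof (rule ext)
  fix m :: monom
  define D where "D = wdeg w1 m"
  interpret S: setting p "D + 1" i
    by unfold_locales (use assms in auto)
  define P where "P j = S.Tc r n D (j - 1)" for j
  let ?F1 = "\<lambda>m. tau (rsup r p m) (n + 1) tseq tsseq" and ?F2 = "\<lambda>m. tau (rsup r p m) n tseq tsseq"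
  have tl: "tau (rsup r p j) N tseq tsseq x = Poly_Mapping.lookup (P j) x"
    if j: "1 \<le> j" and N: "N = n + int (S.del (j - 1))" and x: "subm x m" for j N x
  proof -
    have "wdeg w1 x \<le> 2 * D" using subm_wdeg[OF x, of w1] by (simp add: D_def)
    then have "tau (rsup r p j) N tseq tsseq x = Poly_Mapping.lookup (\<Sum>l\<in>PB D. pconst (rho_part (rsup r p j) l N) * (schur l tseq * schur l tsseq)) x"
      by (rule tau_lookup[OF graded_tseq graded_tsseq])
    also have "\<dots> = Poly_Mapping.lookup (P j) x"
      unfolding P_def S.Tc_def using j N by simp
    finally show ?thesis .
  qed
  have A1: "ser_prod ?F1 [1..<i+1] x = Poly_Mapping.lookup (prod_list (map P [1..<i+1])) x" if "subm x m" for x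
  proof (rule ser_prod_lookup[OF _ that])
    fix j x assume "j \<in> set [1..<i+1]" "subm x m"
    then show "?F1 j x = Poly_Mapping.lookup (P j) x" by (intro tl) (auto simp: S.del_def)
  qed
  have A2: "ser_prod ?F2 [i+1..<p+1] x = Poly_Mapping.lookup (prod_list (map P [i+1..<p+1])) x" if "subm x m" for x
  proof (rule ser_prod_lookup[OF _ that])
    fix j x assume "j \<in> set [i+1..<p+1]" "subm x m"
    then show "?F2 j x = Poly_Mapping.lookup (P j) x" by (intro tl) (auto simp: S.del_def)
  qed
  have "ser_mult (ser_prod ?F1 [1..<i+1]) (ser_prod ?F2 [i+1..<p+1]) m
      = Poly_Mapping.lookup (prod_list (map P [1..<i+1]) * prod_list (map P [i+1..<p+1])) m"
  proof (rule ser_mult_lookup)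
    fix x y assume xy: "x + y = m"
    then have "subm x m" "subm y m" unfolding subm_def by (auto intro: exI[of _ y] exI[of _ x] simp: add.commute)
    then show "ser_prod ?F1 [1..<i+1] x = Poly_Mapping.lookup (prod_list (map P [1..<i+1])) x"
      and "ser_prod ?F2 [i+1..<p+1] y = Poly_Mapping.lookup (prod_list (map P [i+1..<p+1])) y"
      using A1 A2 by auto
  qed
  also have "prod_list (map P [1..<i+1]) * prod_list (map P [i+1..<p+1]) = prod_list (map P [1..<p+1])"
  proof -
    have "[1..<p+1] = [1..<i+1] @ [i+1..<p+1]"
      using upt_add_eq_append[of 1 "i+1" "p - i"] assms by simp
    then show ?thesis by simp
  qed
  also have "prod_list (map P [1..<p+1]) = prod P {1..<p+1}"
  proof -
    have "prod P (set [1..<p+1]) = prod_list (map P [1..<p+1])" by (rule prod.distinct_set_conv_list) simp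
    moreover have "set [1..<p+1] = {1..<p+1}" by (rule set_upt)
    ultimately show ?thesis by simp
  qed
  also have "prod P {1..<p+1} = (\<Prod>c<p. S.Tc r n D c)"
  proof -
    have "prod P {0 + 1..<p + 1} = (\<Prod>c\<in>{0..<p}. P (c + 1))" by (rule prod.shift_bounds_nat_ivl)
    then show ?thesis by (simp add: P_def atLeast0LessThan)
  qed
  also have "Poly_Mapping.lookup (\<Prod>c<p. S.Tc r n D c) m = tau r (n * int p + int i) (dilate p tseq) (dilate p tsseq) m"
    by (rule S.main_coeff[symmetric]) (simp_all add: D_def)
  finally show "tau r (n * int p + int i) (dilate p tseq) (dilate p tsseq) m
      = ser_mult (ser_prod ?F1 [1..<i+1]) (ser_prod ?F2 [i+1..<p+1]) m" by simp
qed


end
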